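(* (1) $\mathcal{K}^{\mathsf{TS}}(\overline{K_n})=\{k:k\ge1\}$ for $n\ge2$. (2) $\mathcal{K}^{\mathsf{TS}}(\overline{K_{1,1}})=\{k:k\ge1\}$ and $\mathcal{K}^{\mathsf{TS}}(\overline{K_{1,n}})=\{1,n-1\}$ for $n\ge2$. (3) For $2\le m\le n$: $\mathcal{K}^{\mathsf{TS}}(\overline{K_{m,n}})=\{1,n-1\}$ if $m=n$, and $=\{1\}$ if $m<n$. (4) $\mathcal{K}^{\mathsf{TS}}(\overline{B_1})=\{k:k\ge1\}$ and $\mathcal{K}^{\mathsf{TS}}(\overline{B_p})=\{1,p-1\}$ for $p\ge2$. (5) $\mathcal{K}^{\mathsf{TS}}(\overline{P_n})=\{1\}$ for $n\ge3$. (6) $\mathcal{K}^{\mathsf{TS}}(\overline{C_n})=\{1\}$ for $n\ge4$. (7) $\mathcal{K}^{\mathsf{TS}}(\overline{F_1})=\{k:k\ge1\}$, $\mathcal{K}^{\mathsf{TS}}(\overline{F_2})=\{1\}$, $\mathcal{K}^{\mathsf{TS}}(\overline{F_3})=\{1,2\}$, and $\mathcal{K}^{\mathsf{TS}}(\overline{F_p})=\{1\}$ for $p\ge4$.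
   Context: All graphs are finite, simple, undirected; $\overline{G}$ denotes the complement of $G$. A $k$-clique of a graph $H$ is a set of $k$ pairwise adjacent vertices. For a graph $H$ and integer $k\ge1$, the Token Sliding graph $\mathsf{TS}_k(H)$ has as vertices the $k$-cliques of $H$, and two $k$-cliques $A,B$ are adjacent iff $A\setminus B=\{u\}$, $B\setminus A=\{v\}$ for some vertices $u,v$ with $uv\in E(H)$. For a graph $G$, $\mathcal{K}^{\mathsf{TS}}(G)=\{k\ge1:\ \exists H,\ \mathsf{TS}_k(H)\cong G\}$. $K_n$, $P_n$, $C_n$ denote the complete graph, path, cycle on $n$ vertices; $K_{m,n}$ the complete bipartite graph. The book graph $B_p$ consists of $p$ triangles sharing a common edge; the friendship graph $F_p$ consists of $p$ triangles sharing a common vertex. *)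

theory Defs
  imports Main
begin

type_synonym 'a graph = "'a set \<times> 'a set set"

definition verts :: "'a graph \<Rightarrow> 'a set" where "verts G = fst G"
definition edges :: "'a graph \<Rightarrow> 'a set set" where "edges G = snd G"

definition is_graph :: "'a graph \<Rightarrow> bool" where
  "is_graph G \<longleftrightarrow> finite (verts G) \<and>
     (\<forall>e\<in>edges G. \<exists>u v. u \<in> verts G \<and> v \<in> verts G \<and> u \<noteq> v \<and> e = {u, v})"

definition mk_graph :: "'a set \<Rightarrow> ('a \<Rightarrow> 'a \<Rightarrow> bool) \<Rightarrow> 'a graph" where
  "mk_graph V R = (V, {{u, v} | u v. u \<in> V \<and> v \<in> V \<and> u \<noteq> v \<and> R u v})"

definition complement :: "'a graph \<Rightarrow> 'a graph" where
  "complement G = mk_graph (verts G) (\<lambda>u v. {u, v} \<notin> edges G)"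

definition graph_iso :: "'a graph \<Rightarrow> 'b graph \<Rightarrow> bool" where
  "graph_iso G G' \<longleftrightarrow> (\<exists>f. bij_betw f (verts G) (verts G') \<and>
     (\<forall>u\<in>verts G. \<forall>v\<in>verts G. {u, v} \<in> edges G \<longleftrightarrow> {f u, f v} \<in> edges G'))"

definition cliques :: "nat \<Rightarrow> 'a graph \<Rightarrow> 'a set set" where
  "cliques k H = {A. A \<subseteq> verts H \<and> card A = k \<and> finite A \<and>
      (\<forall>u\<in>A. \<forall>v\<in>A. u \<noteq> v \<longrightarrow> {u, v} \<in> edges H)}"

definition TS :: "nat \<Rightarrow> 'a graph \<Rightarrow> 'a set graph" where
  "TS k H = (cliques k H,
     {{A, B} | A B. A \<in> cliques k H \<and> B \<in> cliques k H \<and>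
        (\<exists>u v. A - B = {u} \<and> B - A = {v} \<and> {u, v} \<in> edges H)})"

text \<open>K^TS(G). The host graph H ranges over all finite simple graphs; every such graph
is isomorphic to one with vertices in nat, so H is taken with vertex type nat.\<close>
definition KTS :: "'b graph \<Rightarrow> nat set" where
  "KTS G = {k. k \<ge> 1 \<and> (\<exists>H :: nat graph. is_graph H \<and> graph_iso (TS k H) G)}"

definition complete_graph :: "nat \<Rightarrow> nat graph" where
  "complete_graph n = mk_graph {0..<n} (\<lambda>u v. True)"

definition complete_bipartite :: "nat \<Rightarrow> nat \<Rightarrow> nat graph" where
  "complete_bipartite m n = mk_graph {0..<m+n} (\<lambda>u v. (u < m \<and> m \<le> v) \<or> (v < m \<and> m \<le> u))"

definition path_graph :: "nat \<Rightarrow> nat graph" where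
  "path_graph n = mk_graph {0..<n} (\<lambda>u v. v = u + 1 \<or> u = v + 1)"

definition cycle_graph :: "nat \<Rightarrow> nat graph" where
  "cycle_graph n = mk_graph {0..<n} (\<lambda>u v. v = (u + 1) mod n \<or> u = (v + 1) mod n)"

text \<open>Book B_p: spine edge {0,1}, pages 2..p+1 each adjacent to 0 and 1.\<close>
definition book_graph :: "nat \<Rightarrow> nat graph" where
  "book_graph p = mk_graph {0..<p+2} (\<lambda>u v. u \<in> {0,1} \<or> v \<in> {0,1})"

text \<open>Friendship F_p: centre 0, triangles {0, 2i-1, 2i} for i = 1..p.\<close>
definition friendship_graph :: "nat \<Rightarrow> nat graph" where
  "friendship_graph p = mk_graph {0..2*p}
     (\<lambda>u v. u = 0 \<or> v = 0 \<or> (odd u \<and> v = u + 1) \<or> (odd v \<and> u = v + 1))"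

end

theory Submission
  imports Defs
begin

lemma verts_mk[simp]: "verts (mk_graph V R) = V"
  by (simp add: verts_def mk_graph_def)

lemma edges_mk: "{u,v} \<in> edges (mk_graph V R) \<longleftrightarrow> u\<in>V \<and> v\<in>V \<and> u\<noteq>v \<and> (R u v \<or> R v u)"
  unfolding edges_def mk_graph_def by (auto simp: doubleton_eq_iff)

lemma verts_compl[simp]: "verts (complement G) = verts G"
  by (simp add: complement_def)

lemma edges_compl_mk: "{u,v} \<in> edges (complement (mk_graph V R)) \<longleftrightarrow> u\<in>V \<and> v\<in>V \<and> u\<noteq>v \<and> \<not> R u v \<and> \<not> R v u"
  unfolding complement_def by (simp add: edges_mk) (auto)

lemma is_graph_mk: "finite V \<Longrightarrow> is_graph (mk_graph V R)"
  unfolding is_graph_def by (auto simp: edges_def mk_graph_def verts_def)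

lemma is_graph_compl: "finite V \<Longrightarrow> is_graph (complement (mk_graph V R))"
  unfolding complement_def by (simp add: is_graph_mk)

lemma verts_TS[simp]: "verts (TS k H) = cliques k H"
  by (simp add: TS_def verts_def)

lemma TS_edge: "{A,B} \<in> edges (TS k H) \<longleftrightarrow> A \<in> cliques k H \<and> B \<in> cliques k H \<and>
   (\<exists>u v. A - B = {u} \<and> B - A = {v} \<and> {u,v} \<in> edges H)"
  unfolding TS_def edges_def by (auto simp: doubleton_eq_iff insert_commute)

lemma iso_inv:
  assumes "bij_betw g (verts G) (verts G')"
    and "\<forall>x\<in>verts G. \<forall>y\<in>verts G. {x,y}\<in>edges G \<longleftrightarrow> {g x, g y} \<in> edges G'"
  shows "graph_iso G' G"
  unfolding graph_iso_def
proof (intro exI conjI ballI)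
  show "bij_betw (inv_into (verts G) g) (verts G') (verts G)"
    using assms(1) by (rule bij_betw_inv_into)
  fix u v assume u: "u \<in> verts G'" and v: "v \<in> verts G'"
  have fu: "inv_into (verts G) g u \<in> verts G" "g (inv_into (verts G) g u) = u"
    using u assms(1) by (auto simp: bij_betw_def intro: inv_into_into f_inv_into_f)
  have fv: "inv_into (verts G) g v \<in> verts G" "g (inv_into (verts G) g v) = v"
    using v assms(1) by (auto simp: bij_betw_def intro: inv_into_into f_inv_into_f)
  show "{u, v} \<in> edges G' \<longleftrightarrow> {inv_into (verts G) g u, inv_into (verts G) g v} \<in> edges G"
    using assms(2) fu fv by metis
qed

lemma TS1_iso:
  assumes "is_graph G"
  shows "graph_iso (TS 1 G) G"
proof (rule iso_inv[where g="\<lambda>v. {v}"])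
  have "cliques 1 G = (\<lambda>v. {v}) ` verts G"
    unfolding cliques_def by (auto simp: card_Suc_eq)
  then show "bij_betw (\<lambda>v. {v}) (verts G) (verts (TS 1 G))"
    by (auto simp: bij_betw_def inj_on_def)
  show "\<forall>x\<in>verts G. \<forall>y\<in>verts G. {x, y} \<in> edges G \<longleftrightarrow> {{x}, {y}} \<in> edges (TS 1 G)"
  proof (intro ballI)
    fix x y assume x: "x \<in> verts G" and y: "y \<in> verts G"
    have c: "{x} \<in> cliques 1 G" "{y} \<in> cliques 1 G" using x y by (auto simp: cliques_def)
    show "{x, y} \<in> edges G \<longleftrightarrow> {{x}, {y}} \<in> edges (TS 1 G)"
    proof (cases "x = y")
      case True
      have "{x} \<notin> edges G" using assms unfolding is_graph_def
        by (metis doubleton_eq_iff insert_absorb2)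
      then show ?thesis using True TS_edge[of "{x}" "{x}" 1 G] by simp
    next
      case False
      then show ?thesis using c by (auto simp: TS_edge)
    qed
  qed
qed

definition clq :: "'a graph \<Rightarrow> 'a set \<Rightarrow> bool" where
  "clq G K \<longleftrightarrow> (\<forall>a\<in>K. \<forall>b\<in>K. a \<noteq> b \<longrightarrow> {a,b} \<in> edges G)"

definition nb :: "'a graph \<Rightarrow> 'a \<Rightarrow> 'a set \<Rightarrow> 'a set" where
  "nb G z K = {a\<in>K. {z,a} \<in> edges G}"

definition good :: "nat \<Rightarrow> 'a graph \<Rightarrow> bool" where
  "good k G \<longleftrightarrow> (\<exists>Bs. (\<forall>K\<in>Bs. finite K \<and> K \<subseteq> verts G \<and> card K = Suc k \<and> clq G K \<and>
        (\<forall>z\<in>verts G - K. card (nb G z K) \<le> 2)) \<and>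
      (\<forall>x\<in>verts G. \<forall>y\<in>verts G. x\<noteq>y \<longrightarrow> {x,y}\<in>edges G \<longrightarrow> (\<exists>K\<in>Bs. x\<in>K \<and> y\<in>K)) \<and>
      (\<forall>K\<in>Bs. \<forall>K'\<in>Bs. \<forall>x y. x\<noteq>y \<longrightarrow> x\<in>K \<longrightarrow> y\<in>K \<longrightarrow> x\<in>K' \<longrightarrow> y\<in>K' \<longrightarrow> K = K')) \<and>
    (\<forall>x\<in>verts G. k dvd card {y\<in>verts G. {x,y}\<in>edges G})"

definition blk :: "'a set \<Rightarrow> 'a set set" where
  "blk S = (\<lambda>x. S - {x}) ` S"

lemma clique_sub:
  assumes "S \<in> cliques (Suc k) H" "x \<in> S"
  shows "S - {x} \<in> cliques k H"
  using assms unfolding cliques_def by auto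

lemma card_blk:
  assumes "finite S"
  shows "card (blk S) = card S"
  unfolding blk_def
  by (rule card_image) (auto simp: inj_on_def)

lemma blk_clq:
  assumes "S \<in> cliques (Suc k) H"
  shows "clq (TS k H) (blk S)"
  unfolding clq_def blk_def
proof (clarify)
  fix x y assume x: "x \<in> S" and y: "y \<in> S" and ne: "S - {x} \<noteq> S - {y}"
  then have xy: "x \<noteq> y" by auto
  have "{y,x} \<in> edges H" using assms x y xy unfolding cliques_def by auto
  moreover have "(S - {x}) - (S - {y}) = {y}" "(S - {y}) - (S - {x}) = {x}" using x y xy by auto
  ultimately show "{S - {x}, S - {y}} \<in> edges (TS k H)"
    using clique_sub[OF assms x] clique_sub[OF assms y] by (auto simp: TS_edge)
qed

lemma blk_nb:
  assumes S: "S \<in> cliques (Suc k) H" and z: "z \<in> cliques k H" "z \<notin> blk S"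
  shows "card (nb (TS k H) z (blk S)) \<le> 2"
proof (cases "nb (TS k H) z (blk S) = {}")
  case True then show ?thesis by simp
next
  case False
  have fS: "finite S" "card S = Suc k" using S by (auto simp: cliques_def)
  have fz: "finite z" "card z = k" using z by (auto simp: cliques_def)
  obtain x where x: "x \<in> S" "{z, S - {x}} \<in> edges (TS k H)"
    using False unfolding nb_def blk_def by auto
  obtain u where u: "z - (S - {x}) = {u}" using x(2) by (auto simp: TS_edge)
  have "\<not> z \<subseteq> S"
  proof
    assume zS: "z \<subseteq> S"
    have "card (S - z) = 1" using fS fz zS by (simp add: card_Diff_subset)
    then obtain y where "S - z = {y}" by (auto simp: card_Suc_eq)
    then have "z = S - {y}" "y \<in> S" using zS by auto
    then show False using z(2) unfolding blk_def by auto
  qed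
  then have zmS: "z - S = {u}" using u by auto
  have e0: "card (z - S) = 1" using zmS by simp
  have e1: "card (z - S) = card z - card (z \<inter> S)" using fz by (simp add: card_Diff_subset_Int)
  have e2: "card (z \<inter> S) \<le> card z" using fz by (intro card_mono) auto
  have e3: "card (S - z) = card S - card (S \<inter> z)" using fS by (simp add: card_Diff_subset_Int)
  have "S \<inter> z = z \<inter> S" by auto
  then have c2: "card (S - z) = 2" using e0 e1 e2 e3 fS fz by simp
  have "nb (TS k H) z (blk S) \<subseteq> (\<lambda>y. S - {y}) ` (S - z)"
  proof
    fix a assume a: "a \<in> nb (TS k H) z (blk S)"
    then obtain y where y: "y \<in> S" "a = S - {y}" "{z, S - {y}} \<in> edges (TS k H)"
      unfolding nb_def blk_def by auto
    obtain u' where u': "z - (S - {y}) = {u'}" using y(3) by (auto simp: TS_edge)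
    have "u \<in> z - (S - {y})" using zmS by auto
    then have "u' = u" using u' by auto
    have "y \<notin> z"
    proof
      assume "y \<in> z"
      then have "y \<in> z - (S - {y})" by auto
      then have "y = u" using u' \<open>u' = u\<close> by auto
      then show False using zmS y(1) by auto
    qed
    then show "a \<in> (\<lambda>y. S - {y}) ` (S - z)" using y by auto
  qed
  then have "card (nb (TS k H) z (blk S)) \<le> card ((\<lambda>y. S - {y}) ` (S - z))"
    using fS by (intro card_mono) auto
  also have "\<dots> \<le> card (S - z)" by (rule card_image_le) (use fS in auto)
  finally show ?thesis using c2 by simp
qed

lemma edge_blk:
  assumes "{A,B} \<in> edges (TS k H)" and that: "B - A = {v}"
  shows "insert v A \<in> cliques (Suc k) H \<and> A \<in> blk (insert v A) \<and> B \<in> blk (insert v A)"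
proof -
  obtain u v' where uv: "A - B = {u}" "B - A = {v'}" "{u,v'} \<in> edges H"
    and cA: "A \<in> cliques k H" and cB: "B \<in> cliques k H"
    using assms by (auto simp: TS_edge)
  have vv: "v' = v" using uv(2) that by auto
  have vA: "v \<notin> A" "v \<in> B" using that by auto
  have uA: "u \<in> A" "u \<notin> B" using uv(1) by auto
  have Beq: "B = insert v (A - {u})" using uv(1) that by auto
  have "insert v A \<in> cliques (Suc k) H"
    unfolding cliques_def
  proof (intro CollectI conjI ballI impI)
    show "insert v A \<subseteq> verts H" using cA cB vA unfolding cliques_def by auto
    show "card (insert v A) = Suc k" using cA vA unfolding cliques_def by auto
    show "finite (insert v A)" using cA unfolding cliques_def by auto
    fix a b assume a: "a \<in> insert v A" and b: "b \<in> insert v A" and ab: "a \<noteq> b"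
    have euv: "{u,v} \<in> edges H" "{v,u} \<in> edges H" using uv(3) vv by (auto simp: insert_commute)
    show "{a, b} \<in> edges H"
    proof (cases "a = v \<or> b = v")
      case False then show ?thesis using a b ab cA unfolding cliques_def by auto
    next
      case True
      then show ?thesis
      proof
        assume av: "a = v"
        show ?thesis
        proof (cases "b = u")
          case True then show ?thesis using av euv by simp
        next
          case False
          then have "b \<in> B" using b ab av Beq by auto
          then show ?thesis using av vA cB ab unfolding cliques_def by auto
        qed
      next
        assume bv: "b = v"
        show ?thesis
        proof (cases "a = u")
          case True then show ?thesis using bv euv by simp
        next
          case False
          then have "a \<in> B" using a ab bv Beq by auto
          then show ?thesis using bv vA cB ab unfolding cliques_def by auto
        qed
      qed
    qed
  qed
  moreover have "A = insert v A - {v}" using vA by auto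
  moreover have "B = insert v A - {u}" using Beq uA vA by auto
  ultimately show ?thesis unfolding blk_def using uA by blast
qed

lemma blk_unique:
  assumes "A \<noteq> B" "A \<in> blk S" "B \<in> blk S" "A \<in> blk S'" "B \<in> blk S'"
  shows "S = S'"
proof -
  have "A \<union> B = S" using assms(1,2,3) unfolding blk_def by auto
  moreover have "A \<union> B = S'" using assms(1,4,5) unfolding blk_def by auto
  ultimately show ?thesis by simp
qed

definition cn :: "'a graph \<Rightarrow> 'a set \<Rightarrow> 'a set" where
  "cn H A = {v\<in>verts H. v \<notin> A \<and> (\<forall>a\<in>A. {a,v} \<in> edges H)}"

lemma TS_nbrs:
  assumes A: "A \<in> cliques k H"
  shows "{B\<in>cliques k H. {A,B} \<in> edges (TS k H)} = (\<lambda>(u,v). insert v (A - {u})) ` (A \<times> cn H A)"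
proof (intro equalityI subsetI)
  fix B assume "B \<in> {B\<in>cliques k H. {A,B} \<in> edges (TS k H)}"
  then have cB: "B \<in> cliques k H" and e: "{A,B} \<in> edges (TS k H)" by auto
  obtain u v where uv: "A - B = {u}" "B - A = {v}" "{u,v} \<in> edges H"
    using e by (auto simp: TS_edge)
  have Beq: "B = insert v (A - {u})" using uv by auto
  have "v \<in> cn H A"
    unfolding cn_def
  proof (intro CollectI conjI ballI)
    show "v \<in> verts H" using cB uv(2) unfolding cliques_def by auto
    show "v \<notin> A" using uv(2) by auto
    fix a assume a: "a \<in> A"
    show "{a, v} \<in> edges H"
    proof (cases "a = u")
      case True then show ?thesis using uv(3) by simp
    next
      case False
      then have "a \<in> B" "v \<in> B" "a \<noteq> v" using a uv by auto
      then show ?thesis using cB unfolding cliques_def by auto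
    qed
  qed
  moreover have "u \<in> A" using uv by auto
  ultimately show "B \<in> (\<lambda>(u,v). insert v (A - {u})) ` (A \<times> cn H A)" using Beq by auto
next
  fix B assume "B \<in> (\<lambda>(u,v). insert v (A - {u})) ` (A \<times> cn H A)"
  then obtain u v where u: "u \<in> A" and v: "v \<in> cn H A" and B: "B = insert v (A - {u})" by auto
  have vv: "v \<in> verts H" "v \<notin> A" "\<forall>a\<in>A. {a,v} \<in> edges H" using v unfolding cn_def by auto
  have fA: "finite A" "card A = k" "A \<subseteq> verts H" using A unfolding cliques_def by auto
  have cB: "B \<in> cliques k H"
    unfolding cliques_def
  proof (intro CollectI conjI ballI impI)
    show "B \<subseteq> verts H" using B vv fA by auto
    show "finite B" using B fA by auto
    show "card B = k" using B vv fA u by (simp add: card_Diff_singleton)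
       (metis One_nat_def Suc_pred card_gt_0_iff empty_iff)
    fix a b assume a: "a \<in> B" and b: "b \<in> B" and ab: "a \<noteq> b"
    show "{a,b} \<in> edges H"
    proof (cases "a = v")
      case True
      then have "b \<in> A" using b ab B by auto
      then show ?thesis using vv True by (simp add: insert_commute)
    next
      case False
      note aF = False
      show ?thesis
      proof (cases "b = v")
        case True
        then have "a \<in> A" using a aF B by auto
        then show ?thesis using vv True by simp
      next
        case False
        then have "a \<in> A" "b \<in> A" using a b aF B by auto
        then show ?thesis using A ab unfolding cliques_def by auto
      qed
    qed
  qed
  have "A - B = {u}" "B - A = {v}" using B u vv by auto
  moreover have "{u,v} \<in> edges H" using vv u by auto
  ultimately have "{A,B} \<in> edges (TS k H)" using A cB by (auto simp: TS_edge)
  then show "B \<in> {B\<in>cliques k H. {A,B} \<in> edges (TS k H)}" using cB by auto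
qed

lemma TS_deg:
  assumes A: "A \<in> cliques k H" and H: "is_graph H"
  shows "card {B\<in>cliques k H. {A,B} \<in> edges (TS k H)} = k * card (cn H A)"
proof -
  have fA: "finite A" "card A = k" using A unfolding cliques_def by auto
  have fN: "finite (cn H A)" using H unfolding is_graph_def cn_def by auto
  have inj: "inj_on (\<lambda>(u,v). insert v (A - {u})) (A \<times> cn H A)"
  proof (rule inj_onI, clarify)
    fix u v u' v' assume u: "u \<in> A" and v: "v \<in> cn H A" and u': "u' \<in> A" and v': "v' \<in> cn H A"
      and eq: "insert v (A - {u}) = insert v' (A - {u'})"
    have nv: "v \<notin> A" "v' \<notin> A" using v v' unfolding cn_def by auto
    have "v = v'" using eq nv by (metis Diff_iff insertCI insertE)
    moreover have "u = u'"
    proof (rule ccontr)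
      assume "u \<noteq> u'"
      then have "u \<in> insert v' (A - {u'})" using u by auto
      then have "u \<in> insert v (A - {u})" using eq by simp
      then show False using u nv by auto
    qed
    ultimately show "u = u' \<and> v = v'" by simp
  qed
  show ?thesis unfolding TS_nbrs[OF A]
    by (simp add: card_image[OF inj] card_cartesian_product fA)
qed

lemma TS_good:
  assumes H: "is_graph H"
  shows "good k (TS k H)"
  unfolding good_def
proof (intro conjI)
  show "\<forall>x\<in>verts (TS k H). k dvd card {y \<in> verts (TS k H). {x, y} \<in> edges (TS k H)}"
    using TS_deg[OF _ H] by simp
  let ?Bs = "blk ` cliques (Suc k) H"
  have P1: "\<forall>K\<in>?Bs. finite K \<and> K \<subseteq> verts (TS k H) \<and> card K = Suc k \<and> clq (TS k H) K \<and>
        (\<forall>z\<in>verts (TS k H) - K. card (nb (TS k H) z K) \<le> 2)"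
  proof
    fix K assume "K \<in> ?Bs"
    then obtain S where S: "S \<in> cliques (Suc k) H" and K: "K = blk S" by auto
    have fS: "finite S" "card S = Suc k" using S unfolding cliques_def by auto
    show "finite K \<and> K \<subseteq> verts (TS k H) \<and> card K = Suc k \<and> clq (TS k H) K \<and>
        (\<forall>z\<in>verts (TS k H) - K. card (nb (TS k H) z K) \<le> 2)"
      using K fS card_blk[OF fS(1)] blk_clq[OF S] blk_nb[OF S] clique_sub[OF S]
      unfolding blk_def by auto
  qed
  have P2: "\<forall>x\<in>verts (TS k H). \<forall>y\<in>verts (TS k H). x\<noteq>y \<longrightarrow> {x,y}\<in>edges (TS k H) \<longrightarrow> (\<exists>K\<in>?Bs. x\<in>K \<and> y\<in>K)"
  proof (intro ballI impI)
    fix x y assume x: "x \<in> verts (TS k H)" and y: "y \<in> verts (TS k H)" and xy: "x \<noteq> y"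
      and e: "{x,y} \<in> edges (TS k H)"
    obtain v where v: "y - x = {v}" using e by (auto simp: TS_edge)
    show "\<exists>K\<in>?Bs. x \<in> K \<and> y \<in> K" using edge_blk[OF e v] by blast
  qed
  have P3: "\<forall>K\<in>?Bs. \<forall>K'\<in>?Bs. \<forall>x y. x\<noteq>y \<longrightarrow> x\<in>K \<longrightarrow> y\<in>K \<longrightarrow> x\<in>K' \<longrightarrow> y\<in>K' \<longrightarrow> K = K'"
  proof (intro ballI allI impI)
    fix K K' x y assume "K \<in> ?Bs" "K' \<in> ?Bs" and xy: "x \<noteq> y" "x \<in> K" "y \<in> K" "x \<in> K'" "y \<in> K'"
    then obtain S S' where "K = blk S" "K' = blk S'" by auto
    then show "K = K'" using blk_unique[of x y S S'] xy by simp
  qed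
  show "\<exists>Bs. (\<forall>K\<in>Bs. finite K \<and> K \<subseteq> verts (TS k H) \<and> card K = Suc k \<and> clq (TS k H) K \<and>
        (\<forall>z\<in>verts (TS k H) - K. card (nb (TS k H) z K) \<le> 2)) \<and>
      (\<forall>x\<in>verts (TS k H). \<forall>y\<in>verts (TS k H). x\<noteq>y \<longrightarrow> {x,y}\<in>edges (TS k H) \<longrightarrow> (\<exists>K\<in>Bs. x\<in>K \<and> y\<in>K)) \<and>
      (\<forall>K\<in>Bs. \<forall>K'\<in>Bs. \<forall>x y. x\<noteq>y \<longrightarrow> x\<in>K \<longrightarrow> y\<in>K \<longrightarrow> x\<in>K' \<longrightarrow> y\<in>K' \<longrightarrow> K = K')"
    by (rule exI[of _ ?Bs]) (intro conjI P1 P2 P3)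
qed

lemma good_iso:
  assumes iso: "graph_iso G G'" and g: "good k G"
  shows "good k G'"
proof -
  obtain f where bij: "bij_betw f (verts G) (verts G')"
    and E: "\<forall>u\<in>verts G. \<forall>v\<in>verts G. {u, v} \<in> edges G \<longleftrightarrow> {f u, f v} \<in> edges G'"
    using iso unfolding graph_iso_def by (elim conjE exE) (rule that)
  have E': "\<And>u v. u \<in> verts G \<Longrightarrow> v \<in> verts G \<Longrightarrow> {u, v} \<in> edges G \<longleftrightarrow> {f u, f v} \<in> edges G'"
    using E by simp
  have inj: "inj_on f (verts G)" and img: "f ` verts G = verts G'" using bij by (auto simp: bij_betw_def)
  obtain Bs where B1: "\<forall>K\<in>Bs. finite K \<and> K \<subseteq> verts G \<and> card K = Suc k \<and> clq G K \<and>
        (\<forall>z\<in>verts G - K. card (nb G z K) \<le> 2)"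
    and B2: "\<forall>x\<in>verts G. \<forall>y\<in>verts G. x\<noteq>y \<longrightarrow> {x,y}\<in>edges G \<longrightarrow> (\<exists>K\<in>Bs. x\<in>K \<and> y\<in>K)"
    and B3: "\<forall>K\<in>Bs. \<forall>K'\<in>Bs. \<forall>x y. x\<noteq>y \<longrightarrow> x\<in>K \<longrightarrow> y\<in>K \<longrightarrow> x\<in>K' \<longrightarrow> y\<in>K' \<longrightarrow> K = K'"
    and Dg: "\<forall>x\<in>verts G. k dvd card {y\<in>verts G. {x,y}\<in>edges G}"
    using g unfolding good_def by (elim conjE exE) (rule that)
  let ?Bs = "(\<lambda>K. f ` K) ` Bs"
  have P1: "\<forall>K\<in>?Bs. finite K \<and> K \<subseteq> verts G' \<and> card K = Suc k \<and> clq G' K \<and>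
        (\<forall>z\<in>verts G' - K. card (nb G' z K) \<le> 2)"
  proof
    fix K' assume "K' \<in> ?Bs"
    then obtain K where K: "K \<in> Bs" "K' = f ` K" by auto
    have KK: "finite K" "K \<subseteq> verts G" "card K = Suc k" "clq G K"
      "\<forall>z\<in>verts G - K. card (nb G z K) \<le> 2" using B1 K(1) by auto
    have injK: "inj_on f K" using inj KK(2) inj_on_subset by blast
    show "finite K' \<and> K' \<subseteq> verts G' \<and> card K' = Suc k \<and> clq G' K' \<and>
        (\<forall>z\<in>verts G' - K'. card (nb G' z K') \<le> 2)"
    proof (intro conjI ballI)
      show "finite K'" using K KK by auto
      show "K' \<subseteq> verts G'" using K KK img by auto
      show "card K' = Suc k" using K KK card_image[OF injK] by simp
      show "clq G' K'" unfolding clq_def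
      proof (intro ballI impI)
        fix a' b' assume "a' \<in> K'" "b' \<in> K'" "a' \<noteq> b'"
        then obtain a b where "a \<in> K" "b \<in> K" "a' = f a" "b' = f b" "a \<noteq> b" using K by auto
        then show "{a', b'} \<in> edges G'" using KK E unfolding clq_def by blast
      qed
      fix z' assume z': "z' \<in> verts G' - K'"
      then obtain z where z: "z \<in> verts G" "z' = f z" using img by auto
      then have zK: "z \<notin> K" using z' K by auto
      have "nb G' z' K' = f ` nb G z K"
        unfolding nb_def using K KK z E by auto
      then have "card (nb G' z' K') \<le> card (nb G z K)" by (simp add: card_image_le KK nb_def)
      also have "\<dots> \<le> 2" using KK z zK by auto
      finally show "card (nb G' z' K') \<le> 2" .
    qed
  qed
  have P2: "\<forall>x\<in>verts G'. \<forall>y\<in>verts G'. x\<noteq>y \<longrightarrow> {x,y}\<in>edges G' \<longrightarrow> (\<exists>K\<in>?Bs. x\<in>K \<and> y\<in>K)"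
  proof (intro ballI impI)
    fix x' y' assume x': "x' \<in> verts G'" and y': "y' \<in> verts G'" and ne: "x' \<noteq> y'" and e: "{x',y'} \<in> edges G'"
    obtain x where x: "x \<in> verts G" "x' = f x" using x' img by blast
    obtain y where y: "y \<in> verts G" "y' = f y" using y' img by blast
    note xy = x y
    then have "x \<noteq> y" "{x,y} \<in> edges G" using ne e E by auto
    then obtain K where "K \<in> Bs" "x \<in> K" "y \<in> K" using B2 xy by blast
    then show "\<exists>K\<in>?Bs. x' \<in> K \<and> y' \<in> K" using xy by auto
  qed
  have P3: "\<forall>K\<in>?Bs. \<forall>K'\<in>?Bs. \<forall>x y. x\<noteq>y \<longrightarrow> x\<in>K \<longrightarrow> y\<in>K \<longrightarrow> x\<in>K' \<longrightarrow> y\<in>K' \<longrightarrow> K = K'"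
  proof (intro ballI allI impI)
    fix K1' K2' x' y' assume K1': "K1' \<in> ?Bs" and K2': "K2' \<in> ?Bs" and ne: "x' \<noteq> y'"
      and m: "x' \<in> K1'" "y' \<in> K1'" "x' \<in> K2'" "y' \<in> K2'"
    obtain K1 K2 where K: "K1 \<in> Bs" "K2 \<in> Bs" "K1' = f ` K1" "K2' = f ` K2" using K1' K2' by auto
    have sub: "K1 \<subseteq> verts G" "K2 \<subseteq> verts G" using B1 K by auto
    obtain x1 y1 where 1: "x1 \<in> K1" "y1 \<in> K1" "x' = f x1" "y' = f y1" using m K by auto
    obtain x2 y2 where 2: "x2 \<in> K2" "y2 \<in> K2" "x' = f x2" "y' = f y2" using m K by auto
    have "x1 = x2" "y1 = y2" using 1 2 sub inj by (auto dest: inj_onD)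
    then have "K1 = K2" using B3 K 1 2 ne by metis
    then show "K1' = K2'" using K by simp
  qed
  have P4: "\<forall>x\<in>verts G'. k dvd card {y\<in>verts G'. {x,y}\<in>edges G'}"
  proof
    fix x' assume x'V: "x' \<in> verts G'"
    obtain x where x: "x \<in> verts G" "x' = f x" using x'V img by blast
    have eq: "{y\<in>verts G'. {x',y}\<in>edges G'} = f ` {y\<in>verts G. {x,y}\<in>edges G}"
    proof (intro equalityI subsetI)
      fix y' assume "y' \<in> {y\<in>verts G'. {x',y}\<in>edges G'}"
      then have y': "y' \<in> verts G'" "{x',y'} \<in> edges G'" by simp_all
      obtain y where y: "y \<in> verts G" "y' = f y" using y'(1) img by blast
      have "{x,y} \<in> edges G" using E'[OF x(1) y(1)] y'(2) x(2) y(2) by simp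
      then show "y' \<in> f ` {y\<in>verts G. {x,y}\<in>edges G}" using y by blast
    next
      fix y' assume "y' \<in> f ` {y\<in>verts G. {x,y}\<in>edges G}"
      then obtain y where y: "y \<in> verts G" "{x,y}\<in>edges G" "y' = f y" by blast
      have "{f x, f y} \<in> edges G'" using E'[OF x(1) y(1)] y(2) by simp
      moreover have "f y \<in> verts G'" using y(1) img by blast
      ultimately show "y' \<in> {y\<in>verts G'. {x',y}\<in>edges G'}" using x(2) y(3) by simp
    qed
    have ij: "inj_on f {y\<in>verts G. {x,y}\<in>edges G}" by (rule inj_on_subset[OF inj]) blast
    have "card {y\<in>verts G'. {x',y}\<in>edges G'} = card {y\<in>verts G. {x,y}\<in>edges G}"
      unfolding eq by (rule card_image[OF ij])
    then show "k dvd card {y\<in>verts G'. {x',y}\<in>edges G'}" using Dg x(1) by simp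
  qed
  show ?thesis unfolding good_def
    by (intro conjI exI[of _ ?Bs] P1 P2 P3 P4)
qed

lemma KTS_good: "k \<in> KTS G \<Longrightarrow> good k G"
proof -
  assume "k \<in> KTS G"
  then obtain H :: "nat graph" where "is_graph H" "graph_iso (TS k H) G" unfolding KTS_def by auto
  then show "good k G" using TS_good good_iso by metis
qed

lemma KTS_one:
  fixes G :: "nat graph"
  assumes "is_graph G" shows "1 \<in> KTS G"
  unfolding KTS_def using assms TS1_iso[OF assms] by blast

lemma diff_single:
  assumes "finite A" "finite B" "card A = k" "card B = k" "A \<noteq> B" "card (A \<union> B) \<le> Suc k"
  shows "\<exists>u. A - B = {u}"
proof -
  have "card (B \<union> (A - B)) = card B + card (A - B)"
    by (rule card_Un_disjoint) (use assms(1,2) in auto)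
  moreover have "B \<union> (A - B) = A \<union> B" by auto
  ultimately have "card (A \<union> B) = card B + card (A - B)" by simp
  moreover have "A - B \<noteq> {}"
  proof
    assume "A - B = {}"
    then have "A \<subseteq> B" by auto
    then have "A = B" using card_subset_eq[OF assms(2) \<open>A \<subseteq> B\<close>] assms(3,4) by simp
    then show False using assms(5) by simp
  qed
  then have "card (A - B) \<ge> 1" using assms(1) by (simp add: Suc_leI card_gt_0_iff)
  ultimately have "card (A - B) = 1" using assms by simp
  then show ?thesis by (simp add: card_1_singleton_iff)
qed

lemma cliques_cls:
  assumes "k \<ge> 1"
  shows "A \<in> cliques k (mk_graph VH (\<lambda>u v. c u = (c v::nat))) \<longleftrightarrow>
    A \<subseteq> VH \<and> card A = k \<and> (\<forall>u\<in>A. \<forall>v\<in>A. c u = c v)"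
proof
  assume A: "A \<in> cliques k (mk_graph VH (\<lambda>u v. c u = (c v::nat)))"
  then have 1: "A \<subseteq> VH \<and> card A = k" unfolding cliques_def by auto
  have "c u = c v" if "u \<in> A" "v \<in> A" for u v
  proof (cases "u = v")
    case False
    then have "{u,v} \<in> edges (mk_graph VH (\<lambda>u v. c u = (c v::nat)))"
      using A that unfolding cliques_def by auto
    then show ?thesis by (auto simp: edges_mk)
  qed simp
  then show "A \<subseteq> VH \<and> card A = k \<and> (\<forall>u\<in>A. \<forall>v\<in>A. c u = c v)" using 1 by blast
next
  assume A: "A \<subseteq> VH \<and> card A = k \<and> (\<forall>u\<in>A. \<forall>v\<in>A. c u = c v)"
  have "card A \<noteq> 0" using conjunct1[OF conjunct2[OF A]] assms by simp
  then have "finite A" by (cases "finite A") auto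
  have ed: "{u,v} \<in> edges (mk_graph VH (\<lambda>u v. c u = (c v::nat)))" if "u \<in> A" "v \<in> A" "u \<noteq> v" for u v
  proof -
    have "\<forall>u\<in>A. \<forall>v\<in>A. c u = c v" using A by (elim conjE)
    then have "c u = c v" using that(1,2) by blast
    moreover have "u \<in> VH" "v \<in> VH" using conjunct1[OF A] that by auto
    ultimately show ?thesis unfolding edges_mk using that(3) by simp
  qed
  then show "A \<in> cliques k (mk_graph VH (\<lambda>u v. c u = (c v::nat)))"
    using conjunct1[OF A] conjunct1[OF conjunct2[OF A]] \<open>finite A\<close> ed unfolding cliques_def verts_mk mem_Collect_eq by blast
qed

lemma DU_iso:
  fixes G :: "'a graph" and c :: "nat \<Rightarrow> nat" and d :: "'a \<Rightarrow> nat" and g :: "'a \<Rightarrow> nat set"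
  assumes k: "k \<ge> 1" and fin: "finite VH"
    and e: "\<forall>i. card {u\<in>VH. c u = i} \<le> Suc k"
    and a: "\<forall>x\<in>verts G. g x \<subseteq> VH \<and> card (g x) = k \<and> (\<forall>y\<in>g x. c y = d x)"
    and b: "inj_on g (verts G)"
    and cc: "\<forall>A. A \<subseteq> VH \<longrightarrow> card A = k \<longrightarrow> (\<forall>u\<in>A. \<forall>v\<in>A. c u = c v) \<longrightarrow> (\<exists>x\<in>verts G. A = g x)"
    and dd: "\<forall>x\<in>verts G. \<forall>y\<in>verts G. {x,y} \<in> edges G \<longleftrightarrow> (x\<noteq>y \<and> d x = d y)"
  shows "graph_iso (TS k (mk_graph VH (\<lambda>u v. c u = c v))) G"
proof (rule iso_inv[where g=g])
  let ?H = "mk_graph VH (\<lambda>u v. c u = c v)"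
  have gx: "g x \<in> cliques k ?H" if "x \<in> verts G" for x
  proof -
    have ax: "g x \<subseteq> VH" "card (g x) = k" "\<forall>y\<in>g x. c y = d x" using a that by auto
    have "\<forall>u\<in>g x. \<forall>v\<in>g x. c u = c v" using ax(3) by simp
    then show ?thesis unfolding cliques_cls[OF k] using ax(1,2) by blast
  qed
  have "g ` verts G = cliques k ?H"
  proof (intro equalityI subsetI)
    fix A assume "A \<in> g ` verts G" then show "A \<in> cliques k ?H" using gx by auto
  next
    fix A assume "A \<in> cliques k ?H"
    then have "A \<subseteq> VH \<and> card A = k \<and> (\<forall>u\<in>A. \<forall>v\<in>A. c u = c v)" unfolding cliques_cls[OF k] .
    then show "A \<in> g ` verts G" using cc by blast
  qed
  then show "bij_betw g (verts G) (verts (TS k ?H))" using b by (simp add: bij_betw_def)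
  show "\<forall>x\<in>verts G. \<forall>y\<in>verts G. {x, y} \<in> edges G \<longleftrightarrow> {g x, g y} \<in> edges (TS k ?H)"
  proof (intro ballI)
    fix x y assume x: "x \<in> verts G" and y: "y \<in> verts G"
    have fx: "finite (g x)" "card (g x) = k" "g x \<subseteq> VH" using a x k by (auto intro: finite_subset[OF _ fin])
    have fy: "finite (g y)" "card (g y) = k" "g y \<subseteq> VH" using a y k by (auto intro: finite_subset[OF _ fin])
    show "{x, y} \<in> edges G \<longleftrightarrow> {g x, g y} \<in> edges (TS k ?H)"
    proof
      assume "{x,y} \<in> edges G"
      then have xy: "x \<noteq> y" "d x = d y" using dd x y by auto
      then have ne: "g x \<noteq> g y" using b x y by (auto dest: inj_onD)
      have sub: "g x \<union> g y \<subseteq> {u\<in>VH. c u = d x}" using a x y xy by auto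
      have "card (g x \<union> g y) \<le> card {u\<in>VH. c u = d x}"
        by (rule card_mono) (use fin sub in auto)
      also have "\<dots> \<le> Suc k" using e by blast
      finally have cu: "card (g x \<union> g y) \<le> Suc k" .
      then have cu': "card (g y \<union> g x) \<le> Suc k" by (simp add: Un_commute)
      obtain u where u: "g x - g y = {u}"
        using diff_single[OF fx(1) fy(1) fx(2) fy(2) ne cu] by blast
      obtain v where v: "g y - g x = {v}"
        using diff_single[OF fy(1) fx(1) fy(2) fx(2) ne[symmetric] cu'] by blast
      have "u \<in> g x" "v \<in> g y" "u \<noteq> v" using u v by auto
      then have "{u,v} \<in> edges ?H" using a x y xy fx fy by (auto simp: edges_mk)
      then show "{g x, g y} \<in> edges (TS k ?H)" using u v gx[OF x] gx[OF y] by (auto simp: TS_edge)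
    next
      assume "{g x, g y} \<in> edges (TS k ?H)"
      then obtain u v where u: "g x - g y = {u}" and v: "g y - g x = {v}" and uv: "{u,v} \<in> edges ?H"
        by (auto simp: TS_edge)
      have "c u = c v" using uv by (auto simp: edges_mk)
      moreover have "c u = d x" "c v = d y" using u v a x y by blast+
      moreover have "x \<noteq> y" using u by auto
      ultimately show "{x,y} \<in> edges G" using dd x y by auto
    qed
  qed
qed

lemma div_cls: "0 < (k::nat) \<Longrightarrow> (y div k = i) \<longleftrightarrow> (i*k \<le> y \<and> y < i*k + k)"
  by (metis add_diff_inverse_nat diff_add_inverse2 div_less_iff_less_mult
    div_times_less_eq_dividend le_less_Suc_eq less_eq_div_iff_mult_less_eq
    mult_Suc not_add_less2)

lemma KTS_intro:
  fixes H :: "nat graph"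
  assumes "k \<ge> 1" "is_graph H" "graph_iso (TS k H) G"
  shows "k \<in> KTS G"
  unfolding KTS_def using assms by blast

lemma edgeless_KTS:
  fixes G :: "'a graph"
  assumes fin: "finite (verts G)" and ne: "\<forall>x\<in>verts G. \<forall>y\<in>verts G. {x,y} \<notin> edges G" and k: "k \<ge> 1"
  shows "k \<in> KTS G"
proof -
  obtain h and n :: nat where h: "h ` verts G = {i. i < n}" "inj_on h (verts G)"
    using finite_imp_inj_to_nat_seg[OF fin] by blast
  define cls where "cls i = {i*k..<i*k+k}" for i
  have kp: "0 < k" using k by simp
  have cls_iff: "y \<in> cls i \<longleftrightarrow> y div k = i" for y i
    unfolding cls_def using div_cls[OF kp] by auto
  have ccls: "card (cls i) = k" "finite (cls i)" for i unfolding cls_def by auto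
  have iso: "graph_iso (TS k (mk_graph {0..<n*k} (\<lambda>u v. u div k = v div k))) G"
  proof (rule DU_iso[where d=h and g="\<lambda>x. cls (h x)"])
    show "k \<ge> 1" by fact
    show "finite {0..<n*k}" by simp
    show "\<forall>i. card {u \<in> {0..<n * k}. u div k = i} \<le> Suc k"
    proof
      fix i
      have "card {u \<in> {0..<n * k}. u div k = i} \<le> card (cls i)"
        by (rule card_mono) (auto simp: ccls cls_iff)
      then show "card {u \<in> {0..<n * k}. u div k = i} \<le> Suc k" using ccls by simp
    qed
    show "\<forall>x\<in>verts G. cls (h x) \<subseteq> {0..<n * k} \<and> card (cls (h x)) = k \<and> (\<forall>y\<in>cls (h x). y div k = h x)"
    proof
      fix x assume x: "x \<in> verts G"
      then have "h x < n" using h by auto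
      then have "h x * k + k \<le> n * k" by (metis Suc_leI mult_Suc mult.commute mult_le_mono1 add.commute)
      then have "cls (h x) \<subseteq> {0..<n * k}" unfolding cls_def by auto
      then show "cls (h x) \<subseteq> {0..<n * k} \<and> card (cls (h x)) = k \<and> (\<forall>y\<in>cls (h x). y div k = h x)"
        using ccls cls_iff by blast
    qed
    show "inj_on (\<lambda>x. cls (h x)) (verts G)"
    proof (rule inj_onI)
      fix x y assume x: "x \<in> verts G" and y: "y \<in> verts G" and eq: "cls (h x) = cls (h y)"
      have "h x * k \<in> cls (h x)" unfolding cls_def using kp by auto
      then have "h x * k \<in> cls (h y)" using eq by simp
      then have "h x = h y" using cls_iff kp by simp
      then show "x = y" using h(2) x y by (auto dest: inj_onD)
    qed
    show "\<forall>A. A \<subseteq> {0..<n * k} \<longrightarrow> card A = k \<longrightarrow> (\<forall>u\<in>A. \<forall>v\<in>A. u div k = v div k) \<longrightarrow>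
         (\<exists>x\<in>verts G. A = cls (h x))"
    proof (intro allI impI)
      fix A assume A: "A \<subseteq> {0..<n * k}" and cA: "card A = k" and same: "\<forall>u\<in>A. \<forall>v\<in>A. u div k = v div k"
      have "A \<noteq> {}" using cA kp by auto
      then obtain u where u: "u \<in> A" by auto
      have "u < n * k" using A u by auto
      then have "u div k < n" using kp by (simp add: div_less_iff_less_mult)
      then obtain x where x: "x \<in> verts G" "h x = u div k" using h(1) by (metis imageE mem_Collect_eq)
      have sub: "A \<subseteq> cls (h x)"
      proof
        fix y assume "y \<in> A"
        then have "y div k = u div k" using same u by blast
        then show "y \<in> cls (h x)" using x cls_iff by simp
      qed
      have "A = cls (h x)" using card_subset_eq[OF ccls(2) sub] cA ccls(1) by simp
      then show "\<exists>x\<in>verts G. A = cls (h x)" using x by blast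
    qed
    show "\<forall>x\<in>verts G. \<forall>y\<in>verts G. {x, y} \<in> edges G \<longleftrightarrow> (x \<noteq> y \<and> h x = h y)"
      using ne h(2) by (auto dest: inj_onD)
  qed
  show ?thesis by (rule KTS_intro[OF k is_graph_mk iso]) simp
qed

lemma sub_one:
  assumes "finite C" "A \<subseteq> C" "Suc (card A) = card C"
  shows "\<exists>x\<in>C. A = C - {x}"
proof -
  have "card (C - A) = 1" using assms by (simp add: card_Diff_subset finite_subset)
  then obtain x where x: "C - A = {x}" by (auto simp: card_Suc_eq)
  then have "A = C - {x}" "x \<in> C" using assms(2) by auto
  then show ?thesis by blast
qed

lemma edges_cbip: "{x,y} \<in> edges (complement (complete_bipartite m n)) \<longleftrightarrow>
   x < m + n \<and> y < m + n \<and> x \<noteq> y \<and> (x < m \<longleftrightarrow> y < m)"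
  unfolding complete_bipartite_def edges_compl_mk by auto

lemma verts_cbip[simp]: "verts (complete_bipartite m n) = {0..<m+n}"
  unfolding complete_bipartite_def by simp

lemma pos_KnKn:
  assumes n: "n \<ge> 2"
  shows "n - 1 \<in> KTS (complement (complete_bipartite n n))"
proof -
  let ?G = "complement (complete_bipartite n n)"
  define c :: "nat \<Rightarrow> nat" where "c u = (if u < n then 0 else 1)" for u
  define C :: "nat \<Rightarrow> nat set" where "C x = (if x < n then {0..<n} else {n..<n+n})" for x
  have cC: "finite (C x)" "card (C x) = n" for x unfolding C_def by auto
  have memC: "y \<in> C x \<longleftrightarrow> y < n + n \<and> c y = c x" for x y unfolding C_def c_def by auto
  have iso: "graph_iso (TS (n - 1) (mk_graph {0..<n+n} (\<lambda>u v. c u = c v))) ?G"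
  proof (rule DU_iso[where d=c and g="\<lambda>x. C x - {x}"])
    show "n - 1 \<ge> 1" using n by simp
    show "finite {0..<n+n}" by simp
    show "\<forall>i. card {u \<in> {0..<n+n}. c u = i} \<le> Suc (n - 1)"
    proof
      fix i
      have "card {u \<in> {0..<n+n}. c u = i} \<le> card (if i = 0 then {0..<n} else {n..<n+n})"
        by (rule card_mono) (auto simp: c_def split: if_splits)
      then show "card {u \<in> {0..<n+n}. c u = i} \<le> Suc (n - 1)" using n by (simp split: if_splits)
    qed
    show "\<forall>x\<in>verts ?G. C x - {x} \<subseteq> {0..<n+n} \<and> card (C x - {x}) = n - 1 \<and> (\<forall>y\<in>C x - {x}. c y = c x)"
    proof
      fix x assume x: "x \<in> verts ?G"
      then have "x \<in> C x" using memC by simp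
      then show "C x - {x} \<subseteq> {0..<n+n} \<and> card (C x - {x}) = n - 1 \<and> (\<forall>y\<in>C x - {x}. c y = c x)"
        using memC cC by auto
    qed
    show "inj_on (\<lambda>x. C x - {x}) (verts ?G)"
    proof (rule inj_onI)
      fix x y assume x: "x \<in> verts ?G" and y: "y \<in> verts ?G" and eq: "C x - {x} = C y - {y}"
      have xC: "x \<in> C x" "y \<in> C y" using x y memC by auto
      have "card (C x - {x}) = n - 1" using xC cC by simp
      then have "C x - {x} \<noteq> {}" using n by (intro notI) simp
      then obtain z where z: "z \<in> C x - {x}" by blast
      then have "z \<in> C y" using eq by auto
      then have "c x = c y" using z memC by auto
      then have "x \<in> C y" using xC memC by auto
      then show "x = y" using eq xC by blast
    qed
    show "\<forall>A. A \<subseteq> {0..<n+n} \<longrightarrow> card A = n - 1 \<longrightarrow> (\<forall>u\<in>A. \<forall>v\<in>A. c u = c v) \<longrightarrow>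
         (\<exists>x\<in>verts ?G. A = C x - {x})"
    proof (intro allI impI)
      fix A assume A: "A \<subseteq> {0..<n+n}" and cA: "card A = n - 1" and same: "\<forall>u\<in>A. \<forall>v\<in>A. c u = c v"
      have "A \<noteq> {}" using cA n by auto
      then obtain u where u: "u \<in> A" by auto
      have sub: "A \<subseteq> C u"
      proof
        fix y assume "y \<in> A"
        then have "c y = c u" using same u by blast
        then show "y \<in> C u" using memC A \<open>y \<in> A\<close> by auto
      qed
      obtain x where x: "x \<in> C u" "A = C u - {x}"
        using sub_one[OF cC(1) sub] cA cC n by auto
      have cxu: "c x = c u" using x(1) memC by simp
      have "C x = C u"
      proof (rule set_eqI)
        fix y show "y \<in> C x \<longleftrightarrow> y \<in> C u" using memC[of y x] memC[of y u] cxu by simp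
      qed
      moreover have "x \<in> verts ?G" using x(1) memC by simp
      ultimately show "\<exists>x\<in>verts ?G. A = C x - {x}" using x by metis
    qed
    show "\<forall>x\<in>verts ?G. \<forall>y\<in>verts ?G. {x, y} \<in> edges ?G \<longleftrightarrow> (x \<noteq> y \<and> c x = c y)"
      unfolding edges_cbip c_def by auto
  qed
  show ?thesis by (rule KTS_intro[OF _ is_graph_mk iso]) (use n in auto)
qed

lemma pos_clique_iso:
  fixes G :: "nat graph"
  assumes k: "k \<ge> 1" and V: "verts G = {0..<q + Suc k}"
    and E: "\<forall>x\<in>verts G. \<forall>y\<in>verts G. {x,y} \<in> edges G \<longleftrightarrow> (x \<noteq> y \<and> q \<le> x \<and> q \<le> y)"
  shows "k \<in> KTS G"
proof -
  define off where "off = q + Suc k"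
  define c :: "nat \<Rightarrow> nat" where "c u = (if u < off then 0 else Suc ((u - off) div k))" for u
  define d :: "nat \<Rightarrow> nat" where "d x = (if x < q then Suc x else 0)" for x
  define B where "B = {q..<off}"
  define Ei where "Ei i = {off + i*k..<off + i*k + k}" for i
  define g where "g x = (if x < q then Ei x else B - {x})" for x
  define VH where "VH = {q..<off + q*k}"
  have kp: "0 < k" using k by simp
  have cB: "finite B" "card B = Suc k" unfolding B_def off_def by auto
  have cE: "finite (Ei i)" "card (Ei i) = k" for i unfolding Ei_def by auto
  have memE: "u \<in> Ei i \<longleftrightarrow> off \<le> u \<and> (u - off) div k = i" for u i
  proof -
    have "u \<in> Ei i \<longleftrightarrow> off \<le> u \<and> i*k \<le> u - off \<and> u - off < i*k + k" unfolding Ei_def by auto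
    then show ?thesis using div_cls[OF kp, of "u - off" i] by auto
  qed
  have c0: "u \<in> VH \<and> c u = 0 \<longleftrightarrow> u \<in> B" for u unfolding VH_def c_def B_def by auto
  have cS: "u \<in> Ei i" if "u \<in> VH \<and> c u = Suc i" for u i
    using that unfolding memE VH_def c_def by (auto split: if_splits)
  have EV: "Ei i \<subseteq> VH" if "i < q" for i
  proof -
    have "i * k + k \<le> q * k" using that by (metis Suc_leI mult_Suc mult_le_mono1 add.commute)
    then show ?thesis unfolding Ei_def VH_def off_def by auto
  qed
  have cE2: "c y = Suc i" if "y \<in> Ei i" for y i
    using that memE unfolding c_def by (auto simp: Ei_def)
  have ga: "g x \<subseteq> VH \<and> card (g x) = k \<and> (\<forall>y\<in>g x. c y = d x)" if x: "x \<in> verts G" for x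
  proof (cases "x < q")
    case True
    then show ?thesis unfolding g_def d_def using EV cE cE2 by auto
  next
    case False
    then have "x \<in> B" using x V unfolding B_def off_def by auto
    have "\<forall>y\<in>B. y \<in> VH \<and> c y = 0" using c0 by blast
    then show ?thesis unfolding g_def d_def using False cB \<open>x \<in> B\<close> by auto
  qed
  have iso: "graph_iso (TS k (mk_graph VH (\<lambda>u v. c u = c v))) G"
  proof (rule DU_iso[where d=d and g=g])
    show "k \<ge> 1" by fact
    show "finite VH" unfolding VH_def by simp
    show "\<forall>i. card {u \<in> VH. c u = i} \<le> Suc k"
    proof
      fix i
      show "card {u \<in> VH. c u = i} \<le> Suc k"
      proof (cases i)
        case 0
        have "card {u \<in> VH. c u = i} \<le> card B" by (rule card_mono) (use cB c0 0 in auto)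
        then show ?thesis using cB by simp
      next
        case (Suc j)
        have "card {u \<in> VH. c u = i} \<le> card (Ei j)" by (rule card_mono) (use cE cS Suc in auto)
        then show ?thesis using cE by simp
      qed
    qed
    show "\<forall>x\<in>verts G. g x \<subseteq> VH \<and> card (g x) = k \<and> (\<forall>y\<in>g x. c y = d x)" using ga by blast
    show "inj_on g (verts G)"
    proof (rule inj_onI)
      fix x y assume x: "x \<in> verts G" and y: "y \<in> verts G" and eq: "g x = g y"
      have "g x \<noteq> {}" using ga[OF x] kp by (intro notI) simp
      then obtain z where z: "z \<in> g x" by blast
      have "c z = d x" "c z = d y" using ga[OF x] ga[OF y] z eq by auto
      then have dxy: "d x = d y" by simp
      show "x = y"
      proof (cases "x < q")
        case True
        then show ?thesis using dxy unfolding d_def by (auto split: if_splits)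
      next
        case False
        then have "y \<ge> q" using dxy unfolding d_def by (auto split: if_splits)
        then have "B - {x} = B - {y}" using eq False unfolding g_def by auto
        moreover have "x \<in> B" using x V False unfolding B_def off_def by auto
        ultimately show ?thesis by blast
      qed
    qed
    show "\<forall>A. A \<subseteq> VH \<longrightarrow> card A = k \<longrightarrow> (\<forall>u\<in>A. \<forall>v\<in>A. c u = c v) \<longrightarrow> (\<exists>x\<in>verts G. A = g x)"
    proof (intro allI impI)
      fix A assume A: "A \<subseteq> VH" and cA: "card A = k" and same: "\<forall>u\<in>A. \<forall>v\<in>A. c u = c v"
      have "A \<noteq> {}" using cA kp by (intro notI) simp
      then obtain u where u: "u \<in> A" by auto
      have cy: "c y = c u" if "y \<in> A" for y using same u that by blast
      show "\<exists>x\<in>verts G. A = g x"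
      proof (cases "c u")
        case 0
        have sub: "A \<subseteq> B"
        proof
          fix y assume y: "y \<in> A"
          then show "y \<in> B" using c0[of y] cy[OF y] 0 A by auto
        qed
        obtain x where x: "x \<in> B" "A = B - {x}" using sub_one[OF cB(1) sub] cA cB by auto
        then have "x \<in> verts G" "\<not> x < q" using V unfolding B_def off_def by auto
        then show ?thesis using x unfolding g_def by auto
      next
        case (Suc i)
        have sub: "A \<subseteq> Ei i"
        proof
          fix y assume y: "y \<in> A"
          then show "y \<in> Ei i" using cS[of y i] cy[OF y] Suc A by auto
        qed
        have "A = Ei i" using card_subset_eq[OF cE(1) sub] cA cE by simp
        moreover have "u \<in> Ei i" using sub u by auto
        then have "i < q"
        proof -
          have "u < off + q * k" using A u unfolding VH_def by auto
          moreover have "off + i * k \<le> u" using \<open>u \<in> Ei i\<close> unfolding Ei_def by auto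
          ultimately have "i * k < q * k" by linarith
          then show ?thesis by (meson mult_less_cancel2)
        qed
        ultimately show ?thesis using V unfolding g_def by (intro bexI[of _ i]) auto
      qed
    qed
    show "\<forall>x\<in>verts G. \<forall>y\<in>verts G. {x, y} \<in> edges G \<longleftrightarrow> (x \<noteq> y \<and> d x = d y)"
      using E unfolding d_def by auto
  qed
  show ?thesis by (rule KTS_intro[OF k is_graph_mk iso]) (simp add: VH_def)
qed

lemma pos_K1Kn:
  assumes n: "n \<ge> 2"
  shows "n - 1 \<in> KTS (complement (complete_bipartite 1 n))"
proof (rule pos_clique_iso[where q=1])
  show "n - 1 \<ge> 1" using n by simp
  show "verts (complement (complete_bipartite 1 n)) = {0..<1 + Suc (n - 1)}" using n by simp
  show "\<forall>x\<in>verts (complement (complete_bipartite 1 n)). \<forall>y\<in>verts (complement (complete_bipartite 1 n)).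
    {x, y} \<in> edges (complement (complete_bipartite 1 n)) \<longleftrightarrow> (x \<noteq> y \<and> 1 \<le> x \<and> 1 \<le> y)"
    unfolding edges_cbip by auto
qed

lemma edges_book: "{x,y} \<in> edges (complement (book_graph p)) \<longleftrightarrow>
   x < p + 2 \<and> y < p + 2 \<and> x \<noteq> y \<and> 2 \<le> x \<and> 2 \<le> y"
  unfolding book_graph_def edges_compl_mk by auto

lemma verts_book[simp]: "verts (book_graph p) = {0..<p+2}"
  unfolding book_graph_def by simp

lemma pos_book:
  assumes p: "p \<ge> 2"
  shows "p - 1 \<in> KTS (complement (book_graph p))"
proof (rule pos_clique_iso[where q=2])
  show "p - 1 \<ge> 1" using p by simp
  show "verts (complement (book_graph p)) = {0..<2 + Suc (p - 1)}" using p by simp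
  show "\<forall>x\<in>verts (complement (book_graph p)). \<forall>y\<in>verts (complement (book_graph p)).
    {x, y} \<in> edges (complement (book_graph p)) \<longleftrightarrow> (x \<noteq> y \<and> 2 \<le> x \<and> 2 \<le> y)"
    unfolding edges_book by auto
qed

lemma verts_fr[simp]: "verts (friendship_graph p) = {0..2*p}"
  unfolding friendship_graph_def by simp

lemma edges_fr: "{x,y} \<in> edges (complement (friendship_graph p)) \<longleftrightarrow>
   x \<le> 2*p \<and> y \<le> 2*p \<and> x \<noteq> y \<and> x \<noteq> 0 \<and> y \<noteq> 0 \<and> \<not> (odd x \<and> y = x + 1) \<and> \<not> (odd y \<and> x = y + 1)"
  unfolding friendship_graph_def edges_compl_mk by auto

lemma sing_compl: "{x} \<notin> edges (complement (mk_graph V R))"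
  using edges_compl_mk[of x x V R] by simp

lemma sing_fr: "{x} \<notin> edges (complement (friendship_graph p))"
  unfolding friendship_graph_def by (rule sing_compl)

lemma sing_TS: "{A} \<notin> edges (TS k H)"
  using TS_edge[of A A k H] by simp

lemma pos_oct: "2 \<in> KTS (complement (friendship_graph 3))"
proof -
  let ?G = "complement (friendship_graph 3)"
  define c :: "nat \<Rightarrow> nat" where "c u = (if u < 4 then 0 else 1)" for u
  let ?H = "mk_graph {0..<6} (\<lambda>u v. c u = c v)"
  define g :: "nat \<Rightarrow> nat set" where "g x = (if x = 0 then {4,5} else if x = 1 then {0,1} else
     if x = 2 then {2,3} else if x = 3 then {0,2} else if x = 4 then {1,3} else if x = 5 then {0,3} else {1,2})" for x
  have cv: "c 0 = 0" "c (Suc 0) = 0" "c 2 = 0" "c 3 = 0" "c 4 = 1" "c 5 = 1" unfolding c_def by simp_all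
  have V: "verts ?G = {0,1,2,3,4,5,6}" by simp code_simp
  have cl: "cliques 2 ?H = {{4,5},{0,1},{2,3},{0,2},{1,3},{0,3},{1,2}}"
  proof (intro equalityI subsetI)
    fix A :: "nat set" assume "A \<in> cliques 2 ?H"
    then have A: "A \<subseteq> {0..<6}" "card A = 2" "\<forall>u\<in>A. \<forall>v\<in>A. c u = c v"
      unfolding cliques_cls[of 2, simplified] by blast+
    obtain a b where ab: "A = {a,b}" "a \<noteq> b" using A(2) by (auto simp: card_2_iff)
    have "a < 6" "b < 6" using A(1) ab by auto
    have "c a = c b" using A(3) ab(1) by blast
    have a6: "a = 0 \<or> a = 1 \<or> a = 2 \<or> a = 3 \<or> a = 4 \<or> a = 5" using \<open>a < 6\<close> by presburger
    have b6: "b = 0 \<or> b = 1 \<or> b = 2 \<or> b = 3 \<or> b = 4 \<or> b = 5" using \<open>b < 6\<close> by presburger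
    show "A \<in> {{4,5},{0,1},{2,3},{0,2},{1,3},{0,3},{1,2}}" using a6 b6 ab(2) \<open>c a = c b\<close> unfolding ab(1)
      by (elim disjE) (simp_all add: c_def doubleton_eq_iff)
  next
    fix A :: "nat set" assume "A \<in> {{4,5},{0,1},{2,3},{0,2},{1,3},{0,3},{1,2}}"
    then show "A \<in> cliques 2 ?H" unfolding cliques_cls[of 2, simplified] c_def by auto
  qed
  have iso: "graph_iso (TS 2 ?H) ?G"
  proof (rule iso_inv[where g=g])
    have "g ` verts ?G = cliques 2 ?H" unfolding V cl by (simp add: g_def insert_commute)
    moreover have "inj_on g (verts ?G)" unfolding V by (simp add: g_def doubleton_eq_iff)
    ultimately show "bij_betw g (verts ?G) (verts (TS 2 ?H))" by (simp add: bij_betw_def)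
    show "\<forall>x\<in>verts ?G. \<forall>y\<in>verts ?G. {x, y} \<in> edges ?G \<longleftrightarrow> {g x, g y} \<in> edges (TS 2 ?H)"
    proof (intro ballI)
      fix x y assume x: "x \<in> verts ?G" and y: "y \<in> verts ?G"
      have xs: "x = 0 \<or> x = 1 \<or> x = 2 \<or> x = 3 \<or> x = 4 \<or> x = 5 \<or> x = 6" using x[unfolded V] by simp
      have ys: "y = 0 \<or> y = 1 \<or> y = 2 \<or> y = 3 \<or> y = 4 \<or> y = 5 \<or> y = 6" using y[unfolded V] by simp
      show "{x, y} \<in> edges ?G \<longleftrightarrow> {g x, g y} \<in> edges (TS 2 ?H)"
        using xs ys
        apply (elim disjE)
        apply (simp_all add: g_def TS_edge cl edges_fr doubleton_eq_iff cv edges_mk sing_TS sing_fr insert_Diff_if)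
        done
    qed
  qed
  show ?thesis by (rule KTS_intro[OF _ is_graph_mk iso]) auto
qed

lemma good_blocks:
  assumes "good k G"
  obtains Bs where
    "\<And>K. K \<in> Bs \<Longrightarrow> finite K \<and> K \<subseteq> verts G \<and> card K = Suc k \<and> clq G K \<and>
        (\<forall>z\<in>verts G - K. card (nb G z K) \<le> 2)"
    "\<And>x y. x\<in>verts G \<Longrightarrow> y\<in>verts G \<Longrightarrow> x\<noteq>y \<Longrightarrow> {x,y}\<in>edges G \<Longrightarrow> (\<exists>K\<in>Bs. x\<in>K \<and> y\<in>K)"
    "\<And>K K' x y. K\<in>Bs \<Longrightarrow> K'\<in>Bs \<Longrightarrow> x\<noteq>y \<Longrightarrow> x\<in>K \<Longrightarrow> y\<in>K \<Longrightarrow> x\<in>K' \<Longrightarrow> y\<in>K' \<Longrightarrow> K = K'"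
proof -
  obtain Bs where a: "\<forall>K\<in>Bs. finite K \<and> K \<subseteq> verts G \<and> card K = Suc k \<and> clq G K \<and>
        (\<forall>z\<in>verts G - K. card (nb G z K) \<le> 2)"
    and b: "\<forall>x\<in>verts G. \<forall>y\<in>verts G. x\<noteq>y \<longrightarrow> {x,y}\<in>edges G \<longrightarrow> (\<exists>K\<in>Bs. x\<in>K \<and> y\<in>K)"
    and c: "\<forall>K\<in>Bs. \<forall>K'\<in>Bs. \<forall>x y. x\<noteq>y \<longrightarrow> x\<in>K \<longrightarrow> y\<in>K \<longrightarrow> x\<in>K' \<longrightarrow> y\<in>K' \<longrightarrow> K = K'"
    using assms unfolding good_def by (elim conjE exE) (rule that)
  show thesis
  proof (rule that)
    show "\<And>K. K \<in> Bs \<Longrightarrow> finite K \<and> K \<subseteq> verts G \<and> card K = Suc k \<and> clq G K \<and>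
        (\<forall>z\<in>verts G - K. card (nb G z K) \<le> 2)" using a by (rule bspec)
    show "\<And>x y. x\<in>verts G \<Longrightarrow> y\<in>verts G \<Longrightarrow> x\<noteq>y \<Longrightarrow> {x,y}\<in>edges G \<Longrightarrow> (\<exists>K\<in>Bs. x\<in>K \<and> y\<in>K)"
      using b by blast
    show "\<And>K K' x y. K\<in>Bs \<Longrightarrow> K'\<in>Bs \<Longrightarrow> x\<noteq>y \<Longrightarrow> x\<in>K \<Longrightarrow> y\<in>K \<Longrightarrow> x\<in>K' \<Longrightarrow> y\<in>K' \<Longrightarrow> K = K'"
      using c by blast
  qed
qed

lemma good_deg:
  assumes "good k G" "x \<in> verts G"
  shows "k dvd card {y\<in>verts G. {x,y}\<in>edges G}"
proof -
  have "\<forall>x\<in>verts G. k dvd card {y\<in>verts G. {x,y}\<in>edges G}"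
    using assms(1) unfolding good_def by (rule conjunct2)
  then show ?thesis using assms(2) by blast
qed

lemma good_block:
  assumes "good k G" "x\<in>verts G" "y\<in>verts G" "x\<noteq>y" "{x,y}\<in>edges G"
  obtains K where "finite K" "K \<subseteq> verts G" "card K = Suc k" "clq G K"
    "\<And>z. z \<in> verts G \<Longrightarrow> z \<notin> K \<Longrightarrow> card (nb G z K) \<le> 2" "x \<in> K" "y \<in> K"
proof -
  obtain Bs where a: "\<forall>K\<in>Bs. finite K \<and> K \<subseteq> verts G \<and> card K = Suc k \<and> clq G K \<and>
        (\<forall>z\<in>verts G - K. card (nb G z K) \<le> 2)"
    and b: "\<forall>x\<in>verts G. \<forall>y\<in>verts G. x\<noteq>y \<longrightarrow> {x,y}\<in>edges G \<longrightarrow> (\<exists>K\<in>Bs. x\<in>K \<and> y\<in>K)"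
    and c: "\<forall>K\<in>Bs. \<forall>K'\<in>Bs. \<forall>x y. x\<noteq>y \<longrightarrow> x\<in>K \<longrightarrow> y\<in>K \<longrightarrow> x\<in>K' \<longrightarrow> y\<in>K' \<longrightarrow> K = K'"
    using assms(1) unfolding good_def by (elim conjE exE) (rule that)
  have "\<exists>K\<in>Bs. x\<in>K \<and> y\<in>K" using b assms(2-5) by blast
  then obtain K where K: "K \<in> Bs" "x \<in> K" "y \<in> K" by blast
  have P: "finite K" "K \<subseteq> verts G" "card K = Suc k" "clq G K"
    "\<forall>z\<in>verts G - K. card (nb G z K) \<le> 2" using a K(1) by simp_all
  show ?thesis
  proof (rule that[OF P(1-4) _ K(2,3)])
    fix z assume "z \<in> verts G" "z \<notin> K"
    then show "card (nb G z K) \<le> 2" using P(5) by blast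
  qed
qed

lemma clqD: "clq G K \<Longrightarrow> a \<in> K \<Longrightarrow> b \<in> K \<Longrightarrow> a \<noteq> b \<Longrightarrow> {a,b} \<in> edges G"
  unfolding clq_def by simp

lemma clique_comp:
  assumes g: "good k G" and k: "k \<ge> 2" and W: "W \<subseteq> verts G" "finite W" "clq G W"
    and xy: "x \<in> W" "y \<in> W" "x \<noteq> y"
    and cl: "\<And>z. z \<in> verts G \<Longrightarrow> {x,z} \<in> edges G \<Longrightarrow> z \<in> W"
  shows "card W = Suc k"
proof -
  have e: "{x,y} \<in> edges G" using clqD[OF W(3) xy] .
  have xv: "x \<in> verts G" "y \<in> verts G" using W(1) xy by auto
  obtain K where K: "finite K" "K \<subseteq> verts G" "card K = Suc k" "clq G K"
    "\<And>z. z \<in> verts G \<Longrightarrow> z \<notin> K \<Longrightarrow> card (nb G z K) \<le> 2" "x \<in> K" "y \<in> K"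
    by (rule good_block[OF g xv xy(3) e]) (rule that)
  have KW: "K \<subseteq> W"
  proof
    fix z assume z: "z \<in> K"
    show "z \<in> W"
    proof (cases "z = x")
      case True then show ?thesis using xy by simp
    next
      case False
      then have "{x,z} \<in> edges G" using clqD[OF K(4) K(6) z] by simp
      then show ?thesis using cl K(2) z by blast
    qed
  qed
  have "W \<subseteq> K"
  proof
    fix w assume w: "w \<in> W"
    show "w \<in> K"
    proof (rule ccontr)
      assume wK: "w \<notin> K"
      have "nb G w K = K"
      proof (intro equalityI subsetI)
        fix a assume a: "a \<in> K"
        then have "a \<noteq> w" "a \<in> W" using wK KW by auto
        then have "{w,a} \<in> edges G" using clqD[OF W(3) w, of a] by simp
        then show "a \<in> nb G w K" using a unfolding nb_def by blast
      qed (auto simp: nb_def)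
      moreover have "w \<in> verts G" using W(1) w by blast
      ultimately have "card K \<le> 2" using K(5)[of w] wK by simp
      then show False using K(3) k by simp
    qed
  qed
  then show ?thesis using KW K(3) by (metis subset_antisym)
qed

lemma clq_cbip1: "clq (complement (complete_bipartite m n)) {0..<m}"
  unfolding clq_def edges_cbip by auto

lemma clq_cbip2: "clq (complement (complete_bipartite m n)) {m..<m+n}"
  unfolding clq_def edges_cbip by auto

lemma neg_cbip:
  assumes g: "good k (complement (complete_bipartite m n))" and k: "k \<ge> 2"
  shows "(m \<ge> 2 \<longrightarrow> m = Suc k) \<and> (n \<ge> 2 \<longrightarrow> n = Suc k)"
proof (intro conjI impI)
  assume m: "m \<ge> 2"
  have "card {0..<m} = Suc k"
    by (rule clique_comp[OF g k _ _ clq_cbip1, of 0 1]) (use m in \<open>auto simp: edges_cbip\<close>)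
  then show "m = Suc k" by simp
next
  assume n: "n \<ge> 2"
  have "card {m..<m+n} = Suc k"
    by (rule clique_comp[OF g k _ _ clq_cbip2, of m "m+1"]) (use n in \<open>auto simp: edges_cbip\<close>)
  then show "n = Suc k" by simp
qed

lemma clq_book: "clq (complement (book_graph p)) {2..<p+2}"
  unfolding clq_def edges_book by auto

lemma neg_book:
  assumes g: "good k (complement (book_graph p))" and k: "k \<ge> 2" and p: "p \<ge> 2"
  shows "p = Suc k"
proof -
  have "card {2..<p+2} = Suc k"
    by (rule clique_comp[OF g k _ _ clq_book, of 2 3]) (use p in \<open>auto simp: edges_book\<close>)
  then show ?thesis by simp
qed

lemma edges_path: "{x,y} \<in> edges (complement (path_graph n)) \<longleftrightarrow>
   x < n \<and> y < n \<and> x \<noteq> y \<and> y \<noteq> x + 1 \<and> x \<noteq> y + 1"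
  unfolding path_graph_def edges_compl_mk by auto

lemma verts_path[simp]: "verts (path_graph n) = {0..<n}"
  unfolding path_graph_def by simp

lemma neg_path:
  assumes g: "good k (complement (path_graph n))" and n: "n \<ge> 3"
  shows "k = 1"
proof -
  let ?G = "complement (path_graph n)"
  have "{y\<in>verts ?G. {0,y}\<in>edges ?G} = {2..<n}" by (auto simp: edges_path)
  moreover have "{y\<in>verts ?G. {1,y}\<in>edges ?G} = {3..<n}" by (auto simp: edges_path)
  moreover have "0 \<in> verts ?G" "1 \<in> verts ?G" using n by auto
  ultimately have "k dvd n - 2" "k dvd n - 3" using good_deg[OF g] by (metis card_atLeastLessThan)+
  then have "k dvd (n - 2) - (n - 3)" by (rule dvd_diff_nat)
  moreover have "(n - 2) - (n - 3) = 1" using n by simp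
  ultimately show ?thesis by simp
qed

lemma modsuc: "x < n \<Longrightarrow> Suc x mod n = (if Suc x = n then 0 else Suc x)"
  by (cases "Suc x = n") auto

lemma edges_cyc: "{x,y} \<in> edges (complement (cycle_graph n)) \<longleftrightarrow>
   x < n \<and> y < n \<and> x \<noteq> y \<and> y \<noteq> x + 1 \<and> x \<noteq> y + 1 \<and> \<not> (x = 0 \<and> y = n - 1) \<and> \<not> (y = 0 \<and> x = n - 1)"
proof (cases "x < n \<and> y < n")
  case True
  have mx: "Suc x mod n = (if Suc x = n then 0 else Suc x)" using True modsuc by blast
  have my: "Suc y mod n = (if Suc y = n then 0 else Suc y)" using True modsuc by blast
  show ?thesis unfolding cycle_graph_def edges_compl_mk using True by (simp add: mx my) (auto)
next
  case False
  then show ?thesis unfolding cycle_graph_def edges_compl_mk by auto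
qed

lemma verts_cyc[simp]: "verts (cycle_graph n) = {0..<n}"
  unfolding cycle_graph_def by simp

lemma nb_le:
  assumes "finite K" "\<And>z. z \<in> verts G \<Longrightarrow> z \<notin> K \<Longrightarrow> card (nb G z K) \<le> 2"
    "z \<in> verts G" "z \<notin> K" "S \<subseteq> K" "\<forall>a\<in>S. {z,a} \<in> edges G"
  shows "card S \<le> 2"
proof -
  have "S \<subseteq> nb G z K" using assms(5,6) unfolding nb_def by blast
  then have "card S \<le> card (nb G z K)" by (rule card_mono[rotated]) (use assms(1) in \<open>auto simp: nb_def\<close>)
  then show ?thesis using assms(2)[OF assms(3,4)] by simp
qed

lemma third_elem:
  assumes "finite K" "card K = 3" "a \<in> K" "b \<in> K" "a \<noteq> b"
  obtains c where "c \<in> K" "c \<noteq> a" "c \<noteq> b"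
proof -
  have "card (K - {a,b}) = 1" using assms by (simp add: card_Diff_subset)
  then obtain c where "K - {a,b} = {c}" by (auto simp: card_Suc_eq)
  then show ?thesis using that by blast
qed

lemma neg_cyc7:
  assumes g: "good 2 (complement (cycle_graph 7))"
  shows False
proof -
  let ?G = "complement (cycle_graph 7)"
  obtain Bs where B1: "\<And>K. K \<in> Bs \<Longrightarrow> finite K \<and> K \<subseteq> verts ?G \<and> card K = Suc 2 \<and> clq ?G K \<and>
        (\<forall>z\<in>verts ?G - K. card (nb ?G z K) \<le> 2)"
    and B2: "\<And>x y. x\<in>verts ?G \<Longrightarrow> y\<in>verts ?G \<Longrightarrow> x\<noteq>y \<Longrightarrow> {x,y}\<in>edges ?G \<Longrightarrow> (\<exists>K\<in>Bs. x\<in>K \<and> y\<in>K)"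
    and B3: "\<And>K K' x y. K\<in>Bs \<Longrightarrow> K'\<in>Bs \<Longrightarrow> x\<noteq>y \<Longrightarrow> x\<in>K \<Longrightarrow> y\<in>K \<Longrightarrow> x\<in>K' \<Longrightarrow> y\<in>K' \<Longrightarrow> K = K'"
    by (rule good_blocks[OF g]) (rule that)
  have "\<exists>K\<in>Bs. 0 \<in> K \<and> 4 \<in> K" by (rule B2) (simp_all add: edges_cyc)
  then obtain K0 where K0: "K0 \<in> Bs" "0 \<in> K0" "4 \<in> K0" by blast
  have "\<exists>K\<in>Bs. 2 \<in> K \<and> 6 \<in> K" by (rule B2) (simp_all add: edges_cyc)
  then obtain K1 where K1: "K1 \<in> Bs" "2 \<in> K1" "6 \<in> K1" by blast
  have P0: "finite K0" "K0 \<subseteq> {0..<7}" "card K0 = 3" "clq ?G K0" using B1[OF K0(1)] by auto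
  have P1: "finite K1" "K1 \<subseteq> {0..<7}" "card K1 = 3" "clq ?G K1" using B1[OF K1(1)] by auto
  obtain b where b: "b \<in> K0" "b \<noteq> 0" "b \<noteq> 4" using third_elem[OF P0(1,3) K0(2,3)] by auto
  have "{0,b} \<in> edges ?G" "{4,b} \<in> edges ?G" using clqD[OF P0(4)] b K0 by auto
  moreover have "b < 7" using b P0(2) by auto
  then have "b = 0 \<or> b = 1 \<or> b = 2 \<or> b = 3 \<or> b = 4 \<or> b = 5 \<or> b = 6" by presburger
  ultimately have "b = 2" using b by (elim disjE) (simp_all add: edges_cyc)
  then have "2 \<in> K0" using b by simp
  obtain b' where b': "b' \<in> K1" "b' \<noteq> 2" "b' \<noteq> 6" using third_elem[OF P1(1,3) K1(2,3)] by auto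
  have "{2,b'} \<in> edges ?G" "{6,b'} \<in> edges ?G" using clqD[OF P1(4)] b' K1 by auto
  moreover have "b' < 7" using b' P1(2) by auto
  then have "b' = 0 \<or> b' = 1 \<or> b' = 2 \<or> b' = 3 \<or> b' = 4 \<or> b' = 5 \<or> b' = 6" by presburger
  ultimately have "b' = 4" using b' by (elim disjE) (simp_all add: edges_cyc)
  then have "4 \<in> K1" using b' by simp
  have "K0 = K1" using B3[OF K0(1) K1(1), of 2 4] \<open>2 \<in> K0\<close> \<open>4 \<in> K1\<close> K0 K1 by simp
  then have "{0,2,4,6} \<subseteq> K1" using K0 K1 \<open>2 \<in> K0\<close> by auto
  then have "card {0,2,4::nat,6} \<le> card K1" using P1(1) by (rule card_mono[rotated])
  then show False using P1(3) by simp
qed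

lemma neg_cyc:
  assumes g: "good k (complement (cycle_graph n))" and n: "n \<ge> 4" and k: "k \<ge> 2"
  shows False
proof -
  let ?G = "complement (cycle_graph n)"
  have deg0: "{y\<in>verts ?G. {0,y}\<in>edges ?G} = {2..<n-1}" by (auto simp: edges_cyc)
  have "k dvd card {2..<n-1}" using good_deg[OF g, of 0] deg0 n by simp
  then have dvd: "k dvd n - 3" by (simp add: eval_nat_numeral)
  have n5: "n \<ge> 5"
  proof (rule ccontr)
    assume "\<not> n \<ge> 5"
    then have "n = 4" using n by simp
    then have "k dvd 1" using dvd by simp
    then show False using k by simp
  qed
  have e02: "{0,2} \<in> edges ?G" using n5 by (simp add: edges_cyc)
  have v02: "0 \<in> verts ?G" "2 \<in> verts ?G" using n5 by auto
  obtain K where K: "finite K" "K \<subseteq> verts ?G" "card K = Suc k" "clq ?G K"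
    and nbK: "\<And>z. z \<in> verts ?G \<Longrightarrow> z \<notin> K \<Longrightarrow> card (nb ?G z K) \<le> 2"
    and K02: "0 \<in> K" "2 \<in> K"
    by (rule good_block[OF g v02 _ e02]) (simp, rule that)
  define R where "R = K - {0,2}"
  have fR: "finite R" using K(1) unfolding R_def by simp
  have RK: "R \<subseteq> K" unfolding R_def by auto
  have cR: "card R = k - 1"
  proof -
    have "card R = card K - card {0,2::nat}" unfolding R_def using K02 K(1) by (simp add: card_Diff_subset)
    then show ?thesis using K(3) by simp
  qed
  have Rb: "4 \<le> r \<and> r \<le> n - 2" if r: "r \<in> R" for r
  proof -
    have rK: "r \<in> K" "r \<noteq> 0" "r \<noteq> 2" using r unfolding R_def by auto
    have "r < n" using rK K(2) by auto
    moreover have "{0,r} \<in> edges ?G" using clqD[OF K(4) K02(1) rK(1)] rK by simp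
    moreover have "{2,r} \<in> edges ?G" using clqD[OF K(4) K02(2) rK(1)] rK by simp
    ultimately show ?thesis using rK by (auto simp: edges_cyc)
  qed
  have nb_le': "card S \<le> 2" if "z < n" "z \<notin> K" "S \<subseteq> K" "\<forall>a\<in>S. {z,a} \<in> edges ?G" for z S
    using nb_le[OF K(1) nbK _ that(2-4)] that(1) by simp
  have notK: "z \<notin> K" if "a \<in> K" "{z,a} \<notin> edges ?G" "z \<noteq> a" for z a
    using clqD[OF K(4) _ that(1)] that(2,3) by blast
  have "card R \<le> 2"
  proof (rule nb_le'[of 1])
    show "1 \<notin> K" by (rule notK[OF K02(1)]) (simp_all add: edges_cyc)
    show "\<forall>a\<in>R. {1, a} \<in> edges ?G"
    proof
      fix a assume "a \<in> R" then have "4 \<le> a \<and> a \<le> n - 2" by (rule Rb)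
      then show "{1, a} \<in> edges ?G" using n5 by (auto simp: edges_cyc)
    qed
  qed (use n5 RK in auto)
  then have k3: "k \<le> 3" using cR by simp
  have c3: "card (insert 0 (R - {4})) \<le> 2"
  proof (rule nb_le'[of 3])
    show "3 \<notin> K" by (rule notK[OF K02(2)]) (simp_all add: edges_cyc)
    show "\<forall>a\<in>insert 0 (R - {4}). {3, a} \<in> edges ?G"
    proof
      fix a assume a: "a \<in> insert 0 (R - {4})"
      show "{3, a} \<in> edges ?G"
      proof (cases "a = 0")
        case True then show ?thesis using n5 by (auto simp: edges_cyc)
      next
        case False
        then have "a \<in> R" "a \<noteq> 4" using a by auto
        then have "4 \<le> a \<and> a \<le> n - 2" "a \<noteq> 4" using Rb by auto
        then show ?thesis using n5 by (auto simp: edges_cyc)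
      qed
    qed
  qed (use n5 RK K02 in auto)
  have "0 \<notin> R" unfolding R_def by simp
  then have c3': "card (R - {4}) \<le> 1" using c3 fR by simp
  have c4: "card (insert 2 (R - {n-2})) \<le> 2"
  proof (rule nb_le'[of "n-1"])
    show "n - 1 \<notin> K" by (rule notK[OF K02(1)]) (use n5 in \<open>simp_all add: edges_cyc\<close>)
    show "\<forall>a\<in>insert 2 (R - {n-2}). {n-1, a} \<in> edges ?G"
    proof
      fix a assume a: "a \<in> insert 2 (R - {n-2})"
      show "{n-1, a} \<in> edges ?G"
      proof (cases "a = 2")
        case True then show ?thesis using n5 by (auto simp: edges_cyc)
      next
        case False
        then have "a \<in> R" "a \<noteq> n-2" using a by auto
        then have "4 \<le> a \<and> a \<le> n - 2" "a \<noteq> n-2" using Rb by auto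
        then show ?thesis using n5 by (auto simp: edges_cyc)
      qed
    qed
  qed (use n5 RK K02 in auto)
  have "2 \<notin> R" unfolding R_def by simp
  then have c4': "card (R - {n-2}) \<le> 1" using c4 fR by simp
  show False
  proof (cases "k = 3")
    case True
    then have cR2: "card R = 2" using cR by simp
    have R4: "4 \<in> R"
    proof (rule ccontr)
      assume "4 \<notin> R" then have "R - {4} = R" by simp
      then show False using c3' cR2 by simp
    qed
    have Rn: "n - 2 \<in> R"
    proof (rule ccontr)
      assume "n - 2 \<notin> R" then have "R - {n-2} = R" by simp
      then show False using c4' cR2 by simp
    qed
    have ne: "n - 2 \<noteq> 4"
    proof
      assume "n - 2 = 4"
      then have "R \<subseteq> {4}" using Rb by fastforce
      then have "card R \<le> 1" using card_mono[of "{4::nat}" R] by simp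
      then show False using cR2 by simp
    qed
    have "4 \<in> K" "n - 2 \<in> K" using R4 Rn RK by auto
    then have "{4, n-2} \<in> edges ?G" using clqD[OF K(4)] ne by metis
    then have "n - 2 \<noteq> 5" by (simp add: edges_cyc)
    then have n8: "n \<ge> 8" using ne Rb[OF Rn] by simp
    have "n \<noteq> 8" using dvd True by auto
    then have n9: "n \<ge> 9" using n8 by simp
    have "card {0, 2, n-2} \<le> 2"
    proof (rule nb_le'[of 5])
      show "5 \<notin> K" by (rule notK[of 4]) (use R4 RK in \<open>auto simp: edges_cyc\<close>)
      show "\<forall>a\<in>{0, 2, n-2}. {5, a} \<in> edges ?G" using n9 by (auto simp: edges_cyc)
    qed (use n9 RK K02 Rn in auto)
    then show False using n9 by simp
  next
    case False
    then have k2: "k = 2" using k k3 by simp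
    then have "card R = 1" using cR by simp
    then obtain a where Ra: "R = {a}" by (auto simp: card_Suc_eq)
    have a: "4 \<le> a" "a \<le> n - 2" using Rb Ra by auto
    have Keq: "K = {0, 2, a}" using Ra K02 unfolding R_def by auto
    have "n \<noteq> 6" "n \<noteq> 8" using dvd k2 by auto
    then have "n = 7 \<or> n \<ge> 9" using a n5 by auto
    then show False
    proof
      assume "n = 7"
      then show False using neg_cyc7 g k2 by simp
    next
      assume n9: "n \<ge> 9"
      define w where "w = (if 6 \<le> a then 4 else 7::nat)"
      have "card {0, 2, a} \<le> 2"
      proof (rule nb_le'[of w])
        show "w \<notin> K" unfolding Keq w_def using a by auto
        show "\<forall>b\<in>{0, 2, a}. {w, b} \<in> edges ?G" unfolding w_def using n9 a by (auto simp: edges_cyc)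
      qed (use n9 Keq w_def in auto)
      then show False using a by simp
    qed
  qed
qed

lemma pi_eq: "(x::nat) \<ge> 1 \<Longrightarrow> y \<ge> 1 \<Longrightarrow> x \<noteq> y \<Longrightarrow>
   ((odd x \<and> y = x+1) \<or> (odd y \<and> x = y+1)) \<longleftrightarrow> (x+1) div 2 = (y+1) div 2"
  by presburger

lemma edges_fr2: "x \<noteq> 0 \<Longrightarrow> y \<noteq> 0 \<Longrightarrow> {x,y} \<in> edges (complement (friendship_graph p)) \<longleftrightarrow>
   x \<le> 2*p \<and> y \<le> 2*p \<and> x \<noteq> y \<and> (x+1) div 2 \<noteq> (y+1) div 2"
proof -
  assume x: "x \<noteq> 0" and y: "y \<noteq> 0"
  show ?thesis
  proof (cases "x = y")
    case False
    then show ?thesis unfolding edges_fr using pi_eq[of x y] x y by auto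
  qed (simp add: sing_fr)
qed

lemma neg_fr:
  assumes g: "good k (complement (friendship_graph p))" and p: "p \<ge> 2" and k: "k \<ge> 2"
  shows "p = 3 \<and> k = 2"
proof -
  let ?G = "complement (friendship_graph p)"
  let ?pi = "\<lambda>x::nat. (x+1) div 2"
  have e13: "{1,3} \<in> edges ?G" using p by (simp add: edges_fr)
  have v13: "1 \<in> verts ?G" "3 \<in> verts ?G" using p by auto
  obtain K where K: "finite K" "K \<subseteq> verts ?G" "card K = Suc k" "clq ?G K"
    and nbK: "\<And>z. z \<in> verts ?G \<Longrightarrow> z \<notin> K \<Longrightarrow> card (nb ?G z K) \<le> 2"
    and K13: "1 \<in> K" "3 \<in> K"
    by (rule good_block[OF g v13 _ e13]) (simp, rule that)
  have Kr: "1 \<le> x \<and> x \<le> 2*p" if "x \<in> K" for x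
  proof -
    have "x \<le> 2*p" using that K(2) by auto
    moreover have "x \<noteq> 0"
    proof
      assume "x = 0"
      then have "{1,0} \<in> edges ?G" using clqD[OF K(4) K13(1) that] by simp
      then show False by (simp add: edges_fr)
    qed
    ultimately show ?thesis by simp
  qed
  have inj: "inj_on ?pi K"
  proof (rule inj_onI, rule ccontr)
    fix x y assume x: "x \<in> K" and y: "y \<in> K" and eq: "?pi x = ?pi y" and ne: "x \<noteq> y"
    have "{x,y} \<in> edges ?G" by (rule clqD[OF K(4) x y ne])
    then show False using edges_fr2[of x y p] Kr[OF x] Kr[OF y] eq by simp
  qed
  have img: "?pi ` K \<subseteq> {1..p}"
  proof
    fix i assume "i \<in> ?pi ` K"
    then obtain x where x: "x \<in> K" "i = ?pi x" by blast
    then show "i \<in> {1..p}" using Kr[OF x(1)] by auto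
  qed
  have cimg: "card (?pi ` K) = Suc k" using card_image[OF inj] K(3) by simp
  have adj: "{z,a} \<in> edges ?G" if "z \<noteq> 0" "z \<le> 2*p" "a \<in> K" "z \<noteq> a" "?pi z \<noteq> ?pi a" for z a
    using edges_fr2[of z a p] that Kr[OF that(3)] by simp
  show ?thesis
  proof (cases "?pi ` K = {1..p}")
    case False
    then obtain i where i: "i \<in> {1..p}" "i \<notin> ?pi ` K" using img by blast
    define z where "z = 2*i - 1"
    have pz: "?pi z = i" "z \<noteq> 0" "z \<le> 2*p" using i unfolding z_def by auto
    have zK: "z \<notin> K" using i pz by (metis image_eqI)
    have "card K \<le> 2"
    proof (rule nb_le[OF K(1) nbK _ zK])
      show "z \<in> verts ?G" using pz by simp
      show "\<forall>a\<in>K. {z, a} \<in> edges ?G"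
      proof
        fix a assume a: "a \<in> K"
        have "?pi a \<noteq> i" using a i by blast
        then show "{z, a} \<in> edges ?G" using adj[OF pz(2,3) a] a zK pz by metis
      qed
    qed auto
    then show ?thesis using K(3) k by simp
  next
    case True
    then have cp: "Suc k = p" using cimg by simp
    have "\<not> p \<ge> 4"
    proof
      assume p4: "p \<ge> 4"
      have zK: "2 \<notin> K"
      proof
        assume "2 \<in> K"
        moreover have "?pi 2 = ?pi 1" by simp
        ultimately have "(2::nat) = 1" using inj K13(1) inj_onD by metis
        then show False by simp
      qed
      have "card (K - {1}) \<le> 2"
      proof (rule nb_le[OF K(1) nbK _ zK])
        show "2 \<in> verts ?G" using p by simp
        show "\<forall>a\<in>K - {1}. {2, a} \<in> edges ?G"
        proof
          fix a assume a: "a \<in> K - {1}"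
          then have "?pi a \<noteq> ?pi 1" using inj K13(1) inj_onD[of ?pi K a 1] by blast
          then have "?pi (2::nat) \<noteq> ?pi a" by simp
          moreover have "(2::nat) \<noteq> a" using a zK by auto
          ultimately show "{2, a} \<in> edges ?G" using adj[of 2 a] a p by simp
        qed
      qed auto
      then show False using K(1,3) K13(1) p4 cp by simp
    qed
    then show ?thesis using cp k by simp
  qed
qed

lemma KTS_cases: "k \<in> KTS G \<Longrightarrow> k = 1 \<or> (k \<ge> 2 \<and> good k G)"
proof -
  assume a: "k \<in> KTS G"
  then have "k \<ge> 1" unfolding KTS_def by simp
  then show ?thesis using KTS_good[OF a] by (cases "k = 1") auto
qed

lemma KTS_ge1: "k \<in> KTS G \<Longrightarrow> k \<ge> 1"
  unfolding KTS_def by simp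

lemma edgeless_eq:
  fixes G :: "'a graph"
  assumes "finite (verts G)" "\<forall>x\<in>verts G. \<forall>y\<in>verts G. {x,y} \<notin> edges G"
  shows "KTS G = {k. k \<ge> 1}"
  using edgeless_KTS[OF assms] KTS_ge1 by blast

lemma isg_cbip: "is_graph (complement (complete_bipartite m n))"
  unfolding complete_bipartite_def by (rule is_graph_compl) simp

lemma isg_book: "is_graph (complement (book_graph p))"
  unfolding book_graph_def by (rule is_graph_compl) simp

lemma isg_path: "is_graph (complement (path_graph p))"
  unfolding path_graph_def by (rule is_graph_compl) simp

lemma isg_cyc: "is_graph (complement (cycle_graph p))"
  unfolding cycle_graph_def by (rule is_graph_compl) simp

lemma isg_fr: "is_graph (complement (friendship_graph p))"
  unfolding friendship_graph_def by (rule is_graph_compl) simp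

lemma part1: "n \<ge> 2 \<Longrightarrow> KTS (complement (complete_graph n)) = {k. k \<ge> 1}"
  by (rule edgeless_eq) (auto simp: complete_graph_def edges_compl_mk)

lemma part2a: "KTS (complement (complete_bipartite 1 1)) = {k. k \<ge> 1}"
  by (rule edgeless_eq) (auto simp: edges_cbip)

lemma part2b:
  assumes n: "n \<ge> 2"
  shows "KTS (complement (complete_bipartite 1 n)) = {1, n - 1}"
proof (intro equalityI subsetI)
  fix k assume "k \<in> KTS (complement (complete_bipartite 1 n))"
  then have "k = 1 \<or> (k \<ge> 2 \<and> good k (complement (complete_bipartite 1 n)))" by (rule KTS_cases)
  then show "k \<in> {1, n - 1}"
  proof
    assume "k \<ge> 2 \<and> good k (complement (complete_bipartite 1 n))"
    then have "n = Suc k" using neg_cbip[of k 1 n] n by blast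
    then show ?thesis by simp
  qed simp
next
  fix k :: nat assume "k \<in> {1, n - 1}"
  then show "k \<in> KTS (complement (complete_bipartite 1 n))"
    using KTS_one[OF isg_cbip] pos_K1Kn[OF n] by auto
qed

lemma part3:
  assumes mn: "2 \<le> m" "m \<le> n"
  shows "KTS (complement (complete_bipartite m n)) = (if m = n then {1, n - 1} else {1})"
proof (intro equalityI subsetI)
  fix k assume "k \<in> KTS (complement (complete_bipartite m n))"
  then have "k = 1 \<or> (k \<ge> 2 \<and> good k (complement (complete_bipartite m n)))" by (rule KTS_cases)
  then show "k \<in> (if m = n then {1, n - 1} else {1})"
  proof
    assume "k \<ge> 2 \<and> good k (complement (complete_bipartite m n))"
    then have "m = Suc k" "n = Suc k" using neg_cbip[of k m n] mn by auto
    then show ?thesis by simp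
  qed simp
next
  fix k :: nat assume "k \<in> (if m = n then {1, n - 1} else {1})"
  then show "k \<in> KTS (complement (complete_bipartite m n))"
    using KTS_one[OF isg_cbip] pos_KnKn[of n] mn by (auto split: if_splits)
qed

lemma part4a: "KTS (complement (book_graph 1)) = {k. k \<ge> 1}"
  by (rule edgeless_eq) (auto simp: edges_book)

lemma part4b:
  assumes p: "p \<ge> 2"
  shows "KTS (complement (book_graph p)) = {1, p - 1}"
proof (intro equalityI subsetI)
  fix k assume "k \<in> KTS (complement (book_graph p))"
  then have "k = 1 \<or> (k \<ge> 2 \<and> good k (complement (book_graph p)))" by (rule KTS_cases)
  then show "k \<in> {1, p - 1}"
  proof
    assume "k \<ge> 2 \<and> good k (complement (book_graph p))"
    then have "p = Suc k" using neg_book[of k p] p by blast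
    then show ?thesis by simp
  qed simp
next
  fix k :: nat assume "k \<in> {1, p - 1}"
  then show "k \<in> KTS (complement (book_graph p))"
    using KTS_one[OF isg_book] pos_book[OF p] by auto
qed

lemma part5:
  assumes n: "n \<ge> 3"
  shows "KTS (complement (path_graph n)) = {1}"
proof (intro equalityI subsetI)
  fix k assume "k \<in> KTS (complement (path_graph n))"
  then have "k = 1 \<or> (k \<ge> 2 \<and> good k (complement (path_graph n)))" by (rule KTS_cases)
  then show "k \<in> {1}" using neg_path[OF _ n, of k] by auto
next
  fix k :: nat assume "k \<in> {1}"
  then show "k \<in> KTS (complement (path_graph n))" using KTS_one[OF isg_path] by auto
qed

lemma part6:
  assumes n: "n \<ge> 4"
  shows "KTS (complement (cycle_graph n)) = {1}"
proof (intro equalityI subsetI)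
  fix k assume "k \<in> KTS (complement (cycle_graph n))"
  then have "k = 1 \<or> (k \<ge> 2 \<and> good k (complement (cycle_graph n)))" by (rule KTS_cases)
  then show "k \<in> {1}" using neg_cyc[OF _ n, of k] by auto
next
  fix k :: nat assume "k \<in> {1}"
  then show "k \<in> KTS (complement (cycle_graph n))" using KTS_one[OF isg_cyc] by auto
qed

lemma part7a: "KTS (complement (friendship_graph 1)) = {k. k \<ge> 1}"
proof (rule edgeless_eq)
  show "finite (verts (complement (friendship_graph 1)))" by simp
  show "\<forall>x\<in>verts (complement (friendship_graph 1)). \<forall>y\<in>verts (complement (friendship_graph 1)).
     {x, y} \<notin> edges (complement (friendship_graph 1))"
  proof (intro ballI)
    fix x y assume "x \<in> verts (complement (friendship_graph 1))" "y \<in> verts (complement (friendship_graph 1))"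
    then have "x \<le> 2" "y \<le> 2" by auto
    then show "{x, y} \<notin> edges (complement (friendship_graph 1))" unfolding edges_fr by presburger
  qed
qed

lemma part7:
  assumes p: "p \<ge> 2"
  shows "KTS (complement (friendship_graph p)) = (if p = 3 then {1, 2} else {1})"
proof (intro equalityI subsetI)
  fix k assume "k \<in> KTS (complement (friendship_graph p))"
  then have "k = 1 \<or> (k \<ge> 2 \<and> good k (complement (friendship_graph p)))" by (rule KTS_cases)
  then show "k \<in> (if p = 3 then {1, 2} else {1})" using neg_fr[OF _ p, of k] by auto
next
  fix k :: nat assume "k \<in> (if p = 3 then {1, 2} else {1})"
  then show "k \<in> KTS (complement (friendship_graph p))"
    using KTS_one[OF isg_fr] pos_oct by (auto split: if_splits)
qed

theorem theorem3p7:
  shows "(\<forall>n\<ge>2. KTS (complement (complete_graph n)) = {k. k \<ge> 1})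
    \<and> (KTS (complement (complete_bipartite 1 1)) = {k. k \<ge> 1}
       \<and> (\<forall>n\<ge>2. KTS (complement (complete_bipartite 1 n)) = {1, n - 1}))
    \<and> (\<forall>m n. 2 \<le> m \<and> m \<le> n \<longrightarrow>
         KTS (complement (complete_bipartite m n)) = (if m = n then {1, n - 1} else {1}))
    \<and> (KTS (complement (book_graph 1)) = {k. k \<ge> 1}
       \<and> (\<forall>p\<ge>2. KTS (complement (book_graph p)) = {1, p - 1}))
    \<and> (\<forall>n\<ge>3. KTS (complement (path_graph n)) = {1})
    \<and> (\<forall>n\<ge>4. KTS (complement (cycle_graph n)) = {1})
    \<and> (KTS (complement (friendship_graph 1)) = {k. k \<ge> 1}
       \<and> KTS (complement (friendship_graph 2)) = {1}
       \<and> KTS (complement (friendship_graph 3)) = {1, 2}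
       \<and> (\<forall>p\<ge>4. KTS (complement (friendship_graph p)) = {1}))"
proof (intro conjI)
  show "\<forall>n\<ge>2. KTS (complement (complete_graph n)) = {k. k \<ge> 1}" using part1 by blast
  show "KTS (complement (complete_bipartite 1 1)) = {k. k \<ge> 1}" by (rule part2a)
  show "\<forall>n\<ge>2. KTS (complement (complete_bipartite 1 n)) = {1, n - 1}" using part2b by blast
  show "\<forall>m n. 2 \<le> m \<and> m \<le> n \<longrightarrow>
         KTS (complement (complete_bipartite m n)) = (if m = n then {1, n - 1} else {1})" using part3 by blast
  show "KTS (complement (book_graph 1)) = {k. k \<ge> 1}" by (rule part4a)
  show "\<forall>p\<ge>2. KTS (complement (book_graph p)) = {1, p - 1}" using part4b by blast
  show "\<forall>n\<ge>3. KTS (complement (path_graph n)) = {1}" using part5 by blast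
  show "\<forall>n\<ge>4. KTS (complement (cycle_graph n)) = {1}" using part6 by blast
  show "KTS (complement (friendship_graph 1)) = {k. k \<ge> 1}" by (rule part7a)
  show "KTS (complement (friendship_graph 2)) = {1}" using part7[of 2] by simp
  show "KTS (complement (friendship_graph 3)) = {1, 2}" using part7[of 3] by simp
  show "\<forall>p\<ge>4. KTS (complement (friendship_graph p)) = {1}"
  proof (intro allI impI)
    fix p :: nat assume "p \<ge> 4" then show "KTS (complement (friendship_graph p)) = {1}" using part7[of p] by simp
  qed
qed

end
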